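(* Let $V\subseteq\mathcal V$ be finite, $\mathcal E\in\mathit{DProg}(V)$, $W\subseteq\mathcal V$ finite and $Q$ a projector on $\mathcal H_W$. Then $wp^p.\mathcal E.Q=E(\mathcal E^\dagger(Q))$, $wlp^p.\mathcal E.Q=\mathcal N(\mathcal E^\dagger(Q^\perp))$, and $sp^p.\mathcal E.Q=\lceil\mathcal E(Q)\rceil$.
   Context: $\mathcal V$ is a countably infinite set of qubit variables; $\mathcal H_V=\bigotimes_{q\in V}\mathcal H_q$. $\mathcal D(\mathcal H)$: partial density operators; projectors are identified with their image subspaces, ordered by inclusion $\sqsubseteq$; $Q^\perp=I-Q$. $\mathit{DProg}(V)$: completely positive trace-nonincreasing super-operators on $\mathcal L(\mathcal H_V)$; $\mathcal E^\dagger$ its adjoint (${\rm tr}(\mathcal E(A)B)={\rm tr}(A\mathcal E^\dagger(B))$). Convention: operators and super-operators are implicitly extended to $\mathcal H_{V\cup W}$ (and larger systems) by tensoring with identities; all projectors below are regarded on $\mathcal H_{V\cup W}$. $E(A)=\{|\psi\rangle:A|\psi\rangle=|\psi\rangle\}$; $\mathcal N(B)=\{|\psi\rangle:\langle\psi|B|\psi\rangle=0\}$; $\lceil\rho\rceil$ is the support of a positive $\rho$ (span of eigenvectors with nonzero eigenvalues). For projectors $P,Q$: $\mathcal E\models_{tot}(P,Q)$ iff for all finite $X\supseteq V\cup W$ and $\rho\in\mathcal D(\mathcal H_X)$, ${\rm tr}(P\rho)\le{\rm tr}(Q\mathcal E(\rho))$; $\mathcal E\models_{par}(P,Q)$ iff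 for all such $X,\rho$, ${\rm tr}(P\rho)\le{\rm tr}(Q\mathcal E(\rho))+{\rm tr}(\rho)-{\rm tr}(\mathcal E(\rho))$. $wp^p.\mathcal E.Q$ is the largest projector $P$ (w.r.t. $\sqsubseteq$) with $\mathcal E\models_{tot}(P,Q)$; $wlp^p.\mathcal E.Q$ the largest projector $P$ with $\mathcal E\models_{par}(P,Q)$; $sp^p.\mathcal E.Q$ the smallest projector $R$ with $\mathcal E\models_{par}(Q,R)$. *)

theory Defs
  imports Complex_Main
begin

text \<open>Qubit variables are natural numbers (a countably infinite set).
  For a finite set X of variables, the computational basis of H_X is indexed by
  the subsets s of X (s = set of variables in state 1).  Vectors of H_X are
  functions  nat set => complex  vanishing outside Pow X, operators on H_X are
  functions  nat set => nat set => complex  vanishing outside Pow X x Pow X.\<close>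

type_synonym qvec = "nat set \<Rightarrow> complex"
type_synonym qop = "nat set \<Rightarrow> nat set \<Rightarrow> complex"
type_synonym qsop = "qop \<Rightarrow> qop"

definition is_vec :: "nat set \<Rightarrow> qvec \<Rightarrow> bool" where
  "is_vec X v \<longleftrightarrow> (\<forall>s. \<not> s \<subseteq> X \<longrightarrow> v s = 0)"

definition is_op :: "nat set \<Rightarrow> qop \<Rightarrow> bool" where
  "is_op X A \<longleftrightarrow> (\<forall>s t. \<not> (s \<subseteq> X \<and> t \<subseteq> X) \<longrightarrow> A s t = 0)"

definition mapply :: "nat set \<Rightarrow> qop \<Rightarrow> qvec \<Rightarrow> qvec" where
  "mapply X A v = (\<lambda>s. if s \<subseteq> X then (\<Sum>t\<in>Pow X. A s t * v t) else 0)"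

definition mmult :: "nat set \<Rightarrow> qop \<Rightarrow> qop \<Rightarrow> qop" where
  "mmult X A B = (\<lambda>s u. if s \<subseteq> X \<and> u \<subseteq> X then (\<Sum>t\<in>Pow X. A s t * B t u) else 0)"

definition adj :: "qop \<Rightarrow> qop" where
  "adj A = (\<lambda>s t. cnj (A t s))"

definition qtrace :: "nat set \<Rightarrow> qop \<Rightarrow> complex" where
  "qtrace X A = (\<Sum>s\<in>Pow X. A s s)"

definition qinner :: "nat set \<Rightarrow> qvec \<Rightarrow> qvec \<Rightarrow> complex" where
  "qinner X u v = (\<Sum>s\<in>Pow X. cnj (u s) * v s)"

definition positive :: "nat set \<Rightarrow> qop \<Rightarrow> bool" where
  "positive X A \<longleftrightarrow> is_op X A \<and>
     (\<forall>v. is_vec X v \<longrightarrow> qinner X v (mapply X A v) \<in> \<real> \<and> 0 \<le> Re (qinner X v (mapply X A v)))"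

definition pdo :: "nat set \<Rightarrow> qop \<Rightarrow> bool" where
  "pdo X \<rho> \<longleftrightarrow> positive X \<rho> \<and> Re (qtrace X \<rho>) \<le> 1"

definition projector :: "nat set \<Rightarrow> qop \<Rightarrow> bool" where
  "projector X P \<longleftrightarrow> is_op X P \<and> mmult X P P = P \<and> adj P = P"

text \<open>Image subspace of a projector; projectors are identified with it.\<close>
definition img :: "nat set \<Rightarrow> qop \<Rightarrow> qvec set" where
  "img X P = {\<psi>. is_vec X \<psi> \<and> mapply X P \<psi> = \<psi>}"

definition proj_le :: "nat set \<Rightarrow> qop \<Rightarrow> qop \<Rightarrow> bool" where
  "proj_le X P P' \<longleftrightarrow> img X P \<subseteq> img X P'"

definition proj_compl :: "nat set \<Rightarrow> qop \<Rightarrow> qop" where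
  "proj_compl X P = (\<lambda>s t. if s \<subseteq> X \<and> t \<subseteq> X then (if s = t then 1 else 0) - P s t else 0)"

text \<open>Cylindrical extension A \<otimes> I_{X-V} of an operator A on H_V to H_X (V \<subseteq> X).\<close>
definition ext :: "nat set \<Rightarrow> nat set \<Rightarrow> qop \<Rightarrow> qop" where
  "ext V X A = (\<lambda>s t. if s \<subseteq> X \<and> t \<subseteq> X \<and> s - V = t - V then A (s \<inter> V) (t \<inter> V) else 0)"

text \<open>Extension E \<otimes> id_{X-V} of a super-operator E on L(H_V) to L(H_X):
  writing \<rho> = \<Sum>_{a,b} \<rho>_{ab} \<otimes> |a><b| with a,b \<subseteq> X - V, the result is
  \<Sum>_{a,b} E(\<rho>_{ab}) \<otimes> |a><b|.\<close>
definition sext :: "nat set \<Rightarrow> nat set \<Rightarrow> qsop \<Rightarrow> qsop" where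
  "sext V X E \<rho> = (\<lambda>s t. if s \<subseteq> X \<and> t \<subseteq> X then
      E (\<lambda>s' t'. if s' \<subseteq> V \<and> t' \<subseteq> V then \<rho> (s' \<union> (s - V)) (t' \<union> (t - V)) else 0) (s \<inter> V) (t \<inter> V)
    else 0)"

text \<open>DProg(V): completely positive, trace-nonincreasing super-operators on L(H_V).
  Complete positivity: positivity of E \<otimes> id on every larger (finite) system.\<close>
definition DProg :: "nat set \<Rightarrow> qsop \<Rightarrow> bool" where
  "DProg V E \<longleftrightarrow>
     (\<forall>A. is_op V A \<longrightarrow> is_op V (E A)) \<and>
     (\<forall>A B. is_op V A \<longrightarrow> is_op V B \<longrightarrow> E (\<lambda>s t. A s t + B s t) = (\<lambda>s t. E A s t + E B s t)) \<and>
     (\<forall>c A. is_op V A \<longrightarrow> E (\<lambda>s t. c * A s t) = (\<lambda>s t. c * E A s t)) \<and>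
     (\<forall>X \<rho>. finite X \<longrightarrow> V \<subseteq> X \<longrightarrow> positive X \<rho> \<longrightarrow> positive X (sext V X E \<rho>)) \<and>
     (\<forall>\<rho>. positive V \<rho> \<longrightarrow> Re (qtrace V (E \<rho>)) \<le> Re (qtrace V \<rho>))"

definition sadj :: "nat set \<Rightarrow> qsop \<Rightarrow> qsop" where
  "sadj Y F B = (THE G. is_op Y G \<and>
      (\<forall>A. is_op Y A \<longrightarrow> qtrace Y (mmult Y (F A) B) = qtrace Y (mmult Y A G)))"

definition Efix :: "nat set \<Rightarrow> qop \<Rightarrow> qvec set" where
  "Efix Y A = {\<psi>. is_vec Y \<psi> \<and> mapply Y A \<psi> = \<psi>}"

definition Nnull :: "nat set \<Rightarrow> qop \<Rightarrow> qvec set" where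
  "Nnull Y B = {\<psi>. is_vec Y \<psi> \<and> qinner Y \<psi> (mapply Y B \<psi>) = 0}"

definition supp :: "nat set \<Rightarrow> qop \<Rightarrow> qvec set" where
  "supp Y A = {\<psi>. \<exists>S c. finite S \<and>
       S \<subseteq> {v. is_vec Y v \<and> (\<exists>e. e \<noteq> 0 \<and> mapply Y A v = (\<lambda>s. e * v s))} \<and>
       \<psi> = (\<lambda>s. \<Sum>v\<in>S. c v * v s)}"

definition tot :: "nat set \<Rightarrow> nat set \<Rightarrow> qsop \<Rightarrow> qop \<Rightarrow> qop \<Rightarrow> bool" where
  "tot V Y E P Q \<longleftrightarrow> (\<forall>X \<rho>. finite X \<longrightarrow> Y \<subseteq> X \<longrightarrow> pdo X \<rho> \<longrightarrow>
     Re (qtrace X (mmult X (ext Y X P) \<rho>)) \<le> Re (qtrace X (mmult X (ext Y X Q) (sext V X E \<rho>))))"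

definition par :: "nat set \<Rightarrow> nat set \<Rightarrow> qsop \<Rightarrow> qop \<Rightarrow> qop \<Rightarrow> bool" where
  "par V Y E P Q \<longleftrightarrow> (\<forall>X \<rho>. finite X \<longrightarrow> Y \<subseteq> X \<longrightarrow> pdo X \<rho> \<longrightarrow>
     Re (qtrace X (mmult X (ext Y X P) \<rho>)) \<le>
       Re (qtrace X (mmult X (ext Y X Q) (sext V X E \<rho>))) + Re (qtrace X \<rho>) - Re (qtrace X (sext V X E \<rho>)))"

definition wpp :: "nat set \<Rightarrow> nat set \<Rightarrow> qsop \<Rightarrow> qop \<Rightarrow> qop" where
  "wpp V Y E Q = (THE P. projector Y P \<and> tot V Y E P Q \<and>
      (\<forall>P'. projector Y P' \<and> tot V Y E P' Q \<longrightarrow> proj_le Y P' P))"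

definition wlpp :: "nat set \<Rightarrow> nat set \<Rightarrow> qsop \<Rightarrow> qop \<Rightarrow> qop" where
  "wlpp V Y E Q = (THE P. projector Y P \<and> par V Y E P Q \<and>
      (\<forall>P'. projector Y P' \<and> par V Y E P' Q \<longrightarrow> proj_le Y P' P))"

definition spp :: "nat set \<Rightarrow> nat set \<Rightarrow> qsop \<Rightarrow> qop \<Rightarrow> qop" where
  "spp V Y E Q = (THE R. projector Y R \<and> par V Y E Q R \<and>
      (\<forall>R'. projector Y R' \<and> par V Y E Q R' \<longrightarrow> proj_le Y R R'))"

end

theory Submission
  imports Defs "Jordan_Normal_Form.Schur_Decomposition"
begin

definition idop :: "nat set \<Rightarrow> qop" where
  "idop X = (\<lambda>s t. if s \<subseteq> X \<and> t \<subseteq> X \<and> s = t then 1 else 0)"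

definition outer :: "qvec \<Rightarrow> qvec \<Rightarrow> qop" where
  "outer u v = (\<lambda>s t. u s * cnj (v t))"

lemma mmult_eq: "s \<subseteq> X \<Longrightarrow> u \<subseteq> X \<Longrightarrow> mmult X A B s u = (\<Sum>t\<in>Pow X. A s t * B t u)"
  unfolding mmult_def by simp

lemma mapply_eq: "s \<subseteq> X \<Longrightarrow> mapply X A v s = (\<Sum>t\<in>Pow X. A s t * v t)"
  unfolding mapply_def by simp

lemma mmult_out: "\<not> (s \<subseteq> X \<and> u \<subseteq> X) \<Longrightarrow> mmult X A B s u = 0"
  unfolding mmult_def by auto

lemma mapply_out: "\<not> s \<subseteq> X \<Longrightarrow> mapply X A v s = 0"
  unfolding mapply_def by simp

lemma mmult_assoc: "mmult X (mmult X A B) C = mmult X A (mmult X B C)"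
proof (intro ext)
  fix s u
  show "mmult X (mmult X A B) C s u = mmult X A (mmult X B C) s u"
  proof (cases "s \<subseteq> X \<and> u \<subseteq> X")
    case True
    have "mmult X (mmult X A B) C s u = (\<Sum>t\<in>Pow X. (\<Sum>r\<in>Pow X. A s r * B r t) * C t u)"
      using True by (simp add: mmult_eq)
    also have "\<dots> = (\<Sum>t\<in>Pow X. \<Sum>r\<in>Pow X. A s r * B r t * C t u)"
      by (simp add: sum_distrib_right)
    also have "\<dots> = (\<Sum>r\<in>Pow X. \<Sum>t\<in>Pow X. A s r * B r t * C t u)"
      by (rule sum.swap)
    also have "\<dots> = (\<Sum>r\<in>Pow X. A s r * (\<Sum>t\<in>Pow X. B r t * C t u))"
      by (simp add: sum_distrib_left mult.assoc)
    also have "\<dots> = mmult X A (mmult X B C) s u"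
      using True by (simp add: mmult_eq)
    finally show ?thesis .
  qed (auto simp: mmult_def)
qed

lemma qtrace_mmult_comm: "qtrace X (mmult X A B) = qtrace X (mmult X B A)"
proof -
  have "qtrace X (mmult X A B) = (\<Sum>s\<in>Pow X. \<Sum>t\<in>Pow X. A s t * B t s)"
    unfolding qtrace_def by (intro sum.cong refl) (simp add: mmult_eq)
  also have "\<dots> = (\<Sum>t\<in>Pow X. \<Sum>s\<in>Pow X. B t s * A s t)"
    by (subst sum.swap) (simp add: mult.commute)
  also have "\<dots> = qtrace X (mmult X B A)"
    unfolding qtrace_def by (intro sum.cong refl) (simp add: mmult_eq)
  finally show ?thesis .
qed

lemma is_op_mmult[simp]: "is_op X (mmult X A B)"
  unfolding is_op_def mmult_def by auto

lemma is_vec_mapply[simp]: "is_vec X (mapply X A v)"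
  unfolding is_vec_def mapply_def by auto

lemma is_op_idop[simp]: "is_op X (idop X)"
  unfolding is_op_def idop_def by auto

lemma mapply_mmult: "mapply X (mmult X A B) v = mapply X A (mapply X B v)"
proof (intro ext)
  fix s
  show "mapply X (mmult X A B) v s = mapply X A (mapply X B v) s"
  proof (cases "s \<subseteq> X")
    case True
    have "mapply X (mmult X A B) v s = (\<Sum>t\<in>Pow X. (\<Sum>r\<in>Pow X. A s r * B r t) * v t)"
      using True by (simp add: mmult_eq mapply_eq)
    also have "\<dots> = (\<Sum>t\<in>Pow X. \<Sum>r\<in>Pow X. A s r * B r t * v t)"
      by (simp add: sum_distrib_right)
    also have "\<dots> = (\<Sum>r\<in>Pow X. \<Sum>t\<in>Pow X. A s r * B r t * v t)"
      by (rule sum.swap)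
    also have "\<dots> = (\<Sum>r\<in>Pow X. A s r * (\<Sum>t\<in>Pow X. B r t * v t))"
      by (simp add: sum_distrib_left mult.assoc)
    also have "\<dots> = mapply X A (mapply X B v) s"
      using True by (simp add: mapply_eq)
    finally show ?thesis .
  qed (auto simp: mapply_def)
qed

lemma qinner_mapply_adj: "qinner X u (mapply X A v) = qinner X (mapply X (adj A) u) v"
proof -
  have "qinner X u (mapply X A v) = (\<Sum>s\<in>Pow X. \<Sum>t\<in>Pow X. cnj (u s) * A s t * v t)"
    unfolding qinner_def by (intro sum.cong refl) (simp add: mapply_eq sum_distrib_left mult.assoc)
  also have "\<dots> = (\<Sum>t\<in>Pow X. \<Sum>s\<in>Pow X. cnj (u s) * A s t * v t)"
    by (rule sum.swap)
  also have "\<dots> = qinner X (mapply X (adj A) u) v"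
    unfolding qinner_def by (intro sum.cong refl) (simp add: mapply_eq adj_def sum_distrib_right sum_distrib_left mult_ac)
  finally show ?thesis .
qed

lemma adj_adj[simp]: "adj (adj A) = A"
  unfolding adj_def by auto

lemma adj_mmult: "adj (mmult X A B) = mmult X (adj B) (adj A)"
  unfolding adj_def mmult_def by (intro ext) (auto simp: mult.commute)

lemma mapply_idop: "finite X \<Longrightarrow> is_vec X v \<Longrightarrow> mapply X (idop X) v = v"
proof (intro ext)
  fix s assume fin: "finite X" and v: "is_vec X v"
  show "mapply X (idop X) v s = v s"
  proof (cases "s \<subseteq> X")
    case True
    have "mapply X (idop X) v s = (\<Sum>t\<in>Pow X. if t = s then v t else 0)"
      using True by (auto simp: mapply_eq idop_def intro!: sum.cong)
    also have "\<dots> = v s" using True fin by (simp add: sum.delta)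
    finally show ?thesis .
  qed (use v in \<open>auto simp: mapply_def is_vec_def\<close>)
qed

lemma mmult_idop_left: "finite X \<Longrightarrow> is_op X A \<Longrightarrow> mmult X (idop X) A = A"
proof (intro ext)
  fix s u assume fin: "finite X" and A: "is_op X A"
  show "mmult X (idop X) A s u = A s u"
  proof (cases "s \<subseteq> X \<and> u \<subseteq> X")
    case True
    have "mmult X (idop X) A s u = (\<Sum>t\<in>Pow X. if t = s then A t u else 0)"
      using True by (auto simp: mmult_eq idop_def intro!: sum.cong)
    also have "\<dots> = A s u" using True fin by (simp add: sum.delta)
    finally show ?thesis .
  qed (use A in \<open>auto simp: mmult_def is_op_def\<close>)
qed

lemma mmult_idop_right: "finite X \<Longrightarrow> is_op X A \<Longrightarrow> mmult X A (idop X) = A"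
proof (intro ext)
  fix s u assume fin: "finite X" and A: "is_op X A"
  show "mmult X A (idop X) s u = A s u"
  proof (cases "s \<subseteq> X \<and> u \<subseteq> X")
    case True
    have "mmult X A (idop X) s u = (\<Sum>t\<in>Pow X. if t = u then A s t else 0)"
      using True by (auto simp: mmult_eq idop_def intro!: sum.cong)
    also have "\<dots> = A s u" using True fin by (simp add: sum.delta)
    finally show ?thesis .
  qed (use A in \<open>auto simp: mmult_def is_op_def\<close>)
qed

lemma adj_idop[simp]: "adj (idop X) = idop X"
  unfolding adj_def idop_def by (intro ext) auto

lemma mmult_add_left: "mmult X (\<lambda>s t. A s t + B s t) C = (\<lambda>s t. mmult X A C s t + mmult X B C s t)"
  unfolding mmult_def by (intro ext) (auto simp: distrib_right sum.distrib)

lemma mmult_add_right: "mmult X C (\<lambda>s t. A s t + B s t) = (\<lambda>s t. mmult X C A s t + mmult X C B s t)"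
  unfolding mmult_def by (intro ext) (auto simp: distrib_left sum.distrib)

lemma mmult_diff_left: "mmult X (\<lambda>s t. A s t - B s t) C = (\<lambda>s t. mmult X A C s t - mmult X B C s t)"
  unfolding mmult_def by (intro ext) (auto simp: left_diff_distrib sum_subtractf)

lemma mmult_diff_right: "mmult X C (\<lambda>s t. A s t - B s t) = (\<lambda>s t. mmult X C A s t - mmult X C B s t)"
  unfolding mmult_def by (intro ext) (auto simp: right_diff_distrib sum_subtractf)

lemma mmult_scale_left: "mmult X (\<lambda>s t. c * A s t) C = (\<lambda>s t. c * mmult X A C s t)"
  unfolding mmult_def by (intro ext) (auto simp: sum_distrib_left mult.assoc)

lemma mmult_scale_right: "mmult X C (\<lambda>s t. c * A s t) = (\<lambda>s t. c * mmult X C A s t)"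
  unfolding mmult_def by (intro ext) (auto simp: sum_distrib_left mult.left_commute)

lemma qtrace_add: "qtrace X (\<lambda>s t. A s t + B s t) = qtrace X A + qtrace X B"
  unfolding qtrace_def by (simp add: sum.distrib)

lemma qtrace_diff: "qtrace X (\<lambda>s t. A s t - B s t) = qtrace X A - qtrace X B"
  unfolding qtrace_def by (simp add: sum_subtractf)

lemma qtrace_scale: "qtrace X (\<lambda>s t. c * A s t) = c * qtrace X A"
  unfolding qtrace_def by (simp add: sum_distrib_left)

lemma mapply_add_vec: "mapply X A (\<lambda>s. u s + v s) = (\<lambda>s. mapply X A u s + mapply X A v s)"
  unfolding mapply_def by (intro ext) (auto simp: distrib_left sum.distrib)

lemma mapply_diff_vec: "mapply X A (\<lambda>s. u s - v s) = (\<lambda>s. mapply X A u s - mapply X A v s)"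
  unfolding mapply_def by (intro ext) (auto simp: right_diff_distrib sum_subtractf)

lemma mapply_scale_vec: "mapply X A (\<lambda>s. c * u s) = (\<lambda>s. c * mapply X A u s)"
  unfolding mapply_def by (intro ext) (auto simp: sum_distrib_left mult.left_commute)

lemma mapply_add_op: "mapply X (\<lambda>s t. A s t + B s t) u = (\<lambda>s. mapply X A u s + mapply X B u s)"
  unfolding mapply_def by (intro ext) (auto simp: distrib_right sum.distrib)

lemma mapply_diff_op: "mapply X (\<lambda>s t. A s t - B s t) u = (\<lambda>s. mapply X A u s - mapply X B u s)"
  unfolding mapply_def by (intro ext) (auto simp: left_diff_distrib sum_subtractf)

lemma mapply_scale_op: "mapply X (\<lambda>s t. c * A s t) u = (\<lambda>s. c * mapply X A u s)"
  unfolding mapply_def by (intro ext) (auto simp: sum_distrib_left mult.assoc)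

lemma qinner_add_right: "qinner X w (\<lambda>s. u s + v s) = qinner X w u + qinner X w v"
  unfolding qinner_def by (simp add: distrib_left sum.distrib)

lemma qinner_diff_right: "qinner X w (\<lambda>s. u s - v s) = qinner X w u - qinner X w v"
  unfolding qinner_def by (simp add: right_diff_distrib sum_subtractf)

lemma qinner_scale_right: "qinner X w (\<lambda>s. c * u s) = c * qinner X w u"
  unfolding qinner_def by (simp add: sum_distrib_left mult.left_commute)

lemma qinner_add_left: "qinner X (\<lambda>s. u s + v s) w = qinner X u w + qinner X v w"
  unfolding qinner_def by (simp add: distrib_right sum.distrib)

lemma qinner_diff_left: "qinner X (\<lambda>s. u s - v s) w = qinner X u w - qinner X v w"
  unfolding qinner_def by (simp add: left_diff_distrib sum_subtractf)

lemma qinner_scale_left: "qinner X (\<lambda>s. c * u s) w = cnj c * qinner X u w"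
  unfolding qinner_def by (simp add: sum_distrib_left mult.assoc)

lemma qinner_cnj: "cnj (qinner X u v) = qinner X v u"
  unfolding qinner_def by (simp add: mult.commute)

lemma qinner_self_real: "qinner X v v = complex_of_real (\<Sum>s\<in>Pow X. (cmod (v s))\<^sup>2)"
  unfolding qinner_def of_real_sum by (intro sum.cong refl) (metis complex_norm_square mult.commute)

lemma qinner_self_nonneg: "0 \<le> Re (qinner X v v)"
  by (simp add: qinner_self_real sum_nonneg)

lemma qinner_self_zero:
  assumes "finite X" "is_vec X v" "qinner X v v = 0" shows "v = (\<lambda>s. 0)"
proof (intro ext)
  fix s
  have "complex_of_real (\<Sum>s\<in>Pow X. (cmod (v s))\<^sup>2) = 0" using assms(3) by (simp only: qinner_self_real)
  hence "(\<Sum>s\<in>Pow X. (cmod (v s))\<^sup>2) = 0" by (simp only: of_real_eq_0_iff)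
  hence "\<forall>s\<in>Pow X. (cmod (v s))\<^sup>2 = 0"
    using assms(1) by (subst sum_nonneg_eq_0_iff[symmetric]) auto
  thus "v s = 0" using assms(2) unfolding is_vec_def by (cases "s \<subseteq> X") auto
qed

definition unitv :: "nat set \<Rightarrow> qvec" where
  "unitv t = (\<lambda>s. if s = t then 1 else 0)"

definition colv :: "nat set \<Rightarrow> qop \<Rightarrow> nat set \<Rightarrow> qvec" where
  "colv X C t = (\<lambda>s. if s \<subseteq> X then C s t else 0)"

lemma is_vec_unitv: "t \<subseteq> X \<Longrightarrow> is_vec X (unitv t)"
  unfolding is_vec_def unitv_def by auto

lemma is_vec_colv[simp]: "is_vec X (colv X C t)"
  unfolding is_vec_def colv_def by auto

lemma mapply_unitv: "finite X \<Longrightarrow> t \<subseteq> X \<Longrightarrow> mapply X A (unitv t) = (\<lambda>s. if s \<subseteq> X then A s t else 0)"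
  unfolding mapply_def unitv_def by (intro ext) (auto simp: if_distrib cong: if_cong)

lemma qinner_unitv_left: "finite X \<Longrightarrow> s \<subseteq> X \<Longrightarrow> qinner X (unitv s) v = v s"
proof -
  assume "finite X" "s \<subseteq> X"
  have "(\<Sum>sa\<in>Pow X. cnj (unitv s sa) * v sa) = (\<Sum>sa\<in>Pow X. if sa = s then v s else 0)"
    by (intro sum.cong) (auto simp: unitv_def)
  thus ?thesis unfolding qinner_def using \<open>finite X\<close> \<open>s \<subseteq> X\<close> by (simp add: sum.delta')
qed

lemma quad_expand:
  "qinner X (\<lambda>s. \<psi> s + t * \<phi> s) (mapply X A (\<lambda>s. \<psi> s + t * \<phi> s)) =
     qinner X \<psi> (mapply X A \<psi>) + t * qinner X \<psi> (mapply X A \<phi>)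
     + cnj t * qinner X \<phi> (mapply X A \<psi>) + cnj t * t * qinner X \<phi> (mapply X A \<phi>)"
  by (simp add: mapply_add_vec mapply_scale_vec qinner_add_left qinner_add_right
        qinner_scale_left qinner_scale_right algebra_simps)

lemma positiveD: "positive X A \<Longrightarrow> is_vec X v \<Longrightarrow> qinner X v (mapply X A v) \<in> \<real>"
  "positive X A \<Longrightarrow> is_vec X v \<Longrightarrow> 0 \<le> Re (qinner X v (mapply X A v))"
  "positive X A \<Longrightarrow> is_op X A"
  unfolding positive_def by auto

lemma is_vec_lin: "is_vec X u \<Longrightarrow> is_vec X v \<Longrightarrow> is_vec X (\<lambda>s. u s + c * v s)"
  unfolding is_vec_def by auto

lemma pos_herm:
  assumes fin: "finite X" and A: "positive X A"
  shows "adj A = A"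
proof (intro ext)
  fix s t
  show "adj A s t = A s t"
  proof (cases "s \<subseteq> X \<and> t \<subseteq> X")
    case False
    with positiveD(3)[OF A] show ?thesis unfolding adj_def is_op_def by auto
  next
    case True
    hence s: "s \<subseteq> X" and t: "t \<subseteq> X" by auto
    have inner: "qinner X (unitv u) (mapply X A (unitv w)) = A u w" if "u \<subseteq> X" "w \<subseteq> X" for u w
      using that fin by (simp add: mapply_unitv qinner_unitv_left)
    have R: "A s s + c * A s t + cnj c * A t s + cnj c * c * A t t \<in> \<real>" for c
    proof -
      have "qinner X (\<lambda>r. unitv s r + c * unitv t r) (mapply X A (\<lambda>r. unitv s r + c * unitv t r)) \<in> \<real>"
        by (rule positiveD(1)[OF A is_vec_lin[OF is_vec_unitv[OF s] is_vec_unitv[OF t]]])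
      thus ?thesis unfolding quad_expand using inner s t by simp
    qed
    have Rs: "A s s \<in> \<real>" using positiveD(1)[OF A is_vec_unitv[OF s]] inner s by simp
    have Rt: "A t t \<in> \<real>" using positiveD(1)[OF A is_vec_unitv[OF t]] inner t by simp
    have R1: "A s t + A t s \<in> \<real>"
    proof -
      have "A s s + 1 * A s t + cnj 1 * A t s + cnj 1 * 1 * A t t \<in> \<real>" by (rule R)
      hence "(A s s + A t t) + (A s t + A t s) \<in> \<real>" by (simp add: algebra_simps)
      moreover have "A s s + A t t \<in> \<real>" using Rs Rt by (rule Reals_add)
      ultimately show ?thesis by (metis Reals_diff add_diff_cancel_left')
    qed
    have R2: "\<i> * A s t - \<i> * A t s \<in> \<real>"
    proof -
      have "A s s + \<i> * A s t + cnj \<i> * A t s + cnj \<i> * \<i> * A t t \<in> \<real>" by (rule R)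
      hence "(A s s + A t t) + (\<i> * A s t - \<i> * A t s) \<in> \<real>" by (simp add: algebra_simps)
      moreover have "A s s + A t t \<in> \<real>" using Rs Rt by (rule Reals_add)
      ultimately show ?thesis by (metis Reals_diff add_diff_cancel_left')
    qed
    have "Im (A s t) + Im (A t s) = 0" using R1 by (simp add: complex_is_Real_iff)
    moreover have "Re (A s t) - Re (A t s) = 0" using R2 by (simp add: complex_is_Real_iff)
    ultimately have "cnj (A t s) = A s t" by (simp add: complex_eq_iff)
    thus ?thesis unfolding adj_def .
  qed
qed

lemma real_quad_nonneg:
  fixes b c :: real
  assumes c: "0 \<le> c" and H: "\<And>r. 0 \<le> 2 * r * b + r * r * c"
  shows "b = 0"
proof (rule ccontr)
  assume b: "b \<noteq> 0"
  define r where "r = - b / (c + 1)"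
  have c1: "c + 1 > 0" using c by simp
  have rc: "r * (c+1) = -b" unfolding r_def using c1 by simp
  have e1: "(c+1)*(c+1) * (2 * r * b) = -2 * b * b * (c+1)"
  proof -
    have "(c+1)*(c+1) * (2 * r * b) = 2 * (r * (c+1)) * b * (c+1)" by (simp add: algebra_simps)
    thus ?thesis using rc by simp
  qed
  have e2: "(c+1)*(c+1) * (r * r * c) = b * b * c"
  proof -
    have "(c+1)*(c+1) * (r * r * c) = (r * (c+1)) * (r * (c+1)) * c" by (simp add: algebra_simps)
    thus ?thesis using rc by simp
  qed
  have "0 \<le> 2 * r * b + r * r * c" by (rule H)
  hence "0 \<le> (c+1)*(c+1) * (2 * r * b + r * r * c)" using c1 by simp
  also have "(c+1)*(c+1) * (2 * r * b + r * r * c) = - b * b * (c + 2)"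
    using e1 e2 by (simp add: algebra_simps)
  finally have le: "b * b * (c + 2) \<le> 0" by simp
  have "b * b > 0" using b by (metis not_real_square_gt_zero)
  moreover have "c + 2 > 0" using c by simp
  ultimately have "b * b * (c + 2) > 0" by (rule mult_pos_pos)
  with le show False by simp
qed

lemma pos_null:
  assumes fin: "finite X" and A: "positive X A" and v: "is_vec X \<psi>"
    and z: "qinner X \<psi> (mapply X A \<psi>) = 0"
  shows "mapply X A \<psi> = (\<lambda>s. 0)"
proof -
  define \<phi> where "\<phi> = mapply X A \<psi>"
  have h: "adj A = A" by (rule pos_herm[OF fin A])
  define b where "b = qinner X \<phi> \<phi>"
  have a: "qinner X \<psi> (mapply X A \<phi>) = b"
    unfolding b_def \<phi>_def by (subst qinner_mapply_adj) (simp add: h)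
  have bR: "b = complex_of_real (Re b)" unfolding b_def by (simp add: qinner_self_real)
  have b2: "qinner X \<phi> (mapply X A \<psi>) = b" unfolding b_def \<phi>_def by (rule refl)
  define c where "c = qinner X \<phi> (mapply X A \<phi>)"
  have cR: "c \<in> \<real>" and c0: "0 \<le> Re c" unfolding c_def \<phi>_def
    using positiveD(1,2)[OF A is_vec_mapply] by auto
  have "0 \<le> 2 * r * Re b + r * r * Re c" for r :: real
  proof -
    have "0 \<le> Re (qinner X (\<lambda>s. \<psi> s + complex_of_real r * \<phi> s) (mapply X A (\<lambda>s. \<psi> s + complex_of_real r * \<phi> s)))"
      by (rule positiveD(2)[OF A is_vec_lin[OF v]]) (simp add: \<phi>_def)
    also have "\<dots> = Re (complex_of_real r * b + complex_of_real r * b + complex_of_real r * complex_of_real r * c)"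
      unfolding quad_expand z a b2 c_def[symmetric] by simp
    also have "\<dots> = 2 * r * Re b + r * r * Re c" using bR by simp
    finally show ?thesis .
  qed
  hence "Re b = 0" by (intro real_quad_nonneg[OF c0])
  hence "b = 0" using bR by simp
  thus ?thesis unfolding b_def \<phi>_def using qinner_self_zero[OF fin is_vec_mapply] by simp
qed

lemma trace_sandwich:
  "qtrace X (mmult X (mmult X (adj C) \<sigma>) C) = (\<Sum>t\<in>Pow X. qinner X (colv X C t) (mapply X \<sigma> (colv X C t)))"
  unfolding qtrace_def
proof (intro sum.cong refl)
  fix t assume t: "t \<in> Pow X"
  have "mmult X (mmult X (adj C) \<sigma>) C t t = (\<Sum>u\<in>Pow X. (\<Sum>r\<in>Pow X. cnj (C r t) * \<sigma> r u) * C u t)"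
    using t by (simp add: mmult_eq adj_def)
  also have "\<dots> = (\<Sum>u\<in>Pow X. \<Sum>r\<in>Pow X. cnj (C r t) * \<sigma> r u * C u t)"
    by (simp add: sum_distrib_right)
  also have "\<dots> = (\<Sum>r\<in>Pow X. \<Sum>u\<in>Pow X. cnj (C r t) * \<sigma> r u * C u t)"
    by (rule sum.swap)
  also have "\<dots> = qinner X (colv X C t) (mapply X \<sigma> (colv X C t))"
    unfolding qinner_def by (intro sum.cong refl) (simp add: mapply_eq colv_def sum_distrib_left mult.assoc)
  finally show "mmult X (mmult X (adj C) \<sigma>) C t t = qinner X (colv X C t) (mapply X \<sigma> (colv X C t))" .
qed

lemma trace_sandwich_nonneg:
  assumes "positive X \<sigma>"
  shows "qtrace X (mmult X (mmult X (adj C) \<sigma>) C) \<in> \<real>" "0 \<le> Re (qtrace X (mmult X (mmult X (adj C) \<sigma>) C))"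
  unfolding trace_sandwich using positiveD(1,2)[OF assms is_vec_colv]
  by (auto intro!: sum_in_Reals sum_nonneg)

lemma trace_sandwich_zero:
  assumes fin: "finite X" and s: "positive X \<sigma>" and z: "Re (qtrace X (mmult X (mmult X (adj C) \<sigma>) C)) = 0"
  shows "mmult X \<sigma> C = (\<lambda>s t. 0)"
proof -
  have "(\<Sum>t\<in>Pow X. Re (qinner X (colv X C t) (mapply X \<sigma> (colv X C t)))) = 0"
    using z unfolding trace_sandwich by (simp add: Re_sum)
  hence all: "\<forall>t\<in>Pow X. Re (qinner X (colv X C t) (mapply X \<sigma> (colv X C t))) = 0"
    using fin positiveD(2)[OF s is_vec_colv] by (subst sum_nonneg_eq_0_iff[symmetric]) auto
  have col0: "mapply X \<sigma> (colv X C t) = (\<lambda>s. 0)" if t: "t \<subseteq> X" for t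
  proof (rule pos_null[OF fin s is_vec_colv])
    have "qinner X (colv X C t) (mapply X \<sigma> (colv X C t)) \<in> \<real>" by (rule positiveD(1)[OF s is_vec_colv])
    thus "qinner X (colv X C t) (mapply X \<sigma> (colv X C t)) = 0"
      using all t by (simp add: complex_is_Real_iff complex_eq_iff)
  qed
  show ?thesis
  proof (intro ext)
    fix s t
    show "mmult X \<sigma> C s t = 0"
    proof (cases "s \<subseteq> X \<and> t \<subseteq> X")
      case True
      have "mmult X \<sigma> C s t = mapply X \<sigma> (colv X C t) s"
        using True by (auto simp: mmult_eq mapply_eq colv_def intro!: sum.cong)
      thus ?thesis using col0 True by simp
    qed (simp add: mmult_out)
  qed
qed

definition subsp :: "nat set \<Rightarrow> qvec set \<Rightarrow> bool" where
  "subsp X S \<longleftrightarrow> (\<forall>v\<in>S. is_vec X v) \<and> (\<lambda>s. 0) \<in> S \<and>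
     (\<forall>a u v. u \<in> S \<longrightarrow> v \<in> S \<longrightarrow> (\<lambda>s. u s + a * v s) \<in> S)"

lemma subspD:
  assumes "subsp X S"
  shows "v \<in> S \<Longrightarrow> is_vec X v" "(\<lambda>s. 0) \<in> S"
    "u \<in> S \<Longrightarrow> v \<in> S \<Longrightarrow> (\<lambda>s. u s + a * v s) \<in> S"
    "u \<in> S \<Longrightarrow> v \<in> S \<Longrightarrow> (\<lambda>s. u s + v s) \<in> S"
    "u \<in> S \<Longrightarrow> v \<in> S \<Longrightarrow> (\<lambda>s. u s - v s) \<in> S"
    "v \<in> S \<Longrightarrow> (\<lambda>s. a * v s) \<in> S"
proof -
  note A = assms[unfolded subsp_def]
  show "v \<in> S \<Longrightarrow> is_vec X v" "(\<lambda>s. 0) \<in> S" "u \<in> S \<Longrightarrow> v \<in> S \<Longrightarrow> (\<lambda>s. u s + a * v s) \<in> S"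
    using A by auto
  show "u \<in> S \<Longrightarrow> v \<in> S \<Longrightarrow> (\<lambda>s. u s + v s) \<in> S" using A[THEN conjunct2, THEN conjunct2, rule_format, of u v 1] by simp
  show "u \<in> S \<Longrightarrow> v \<in> S \<Longrightarrow> (\<lambda>s. u s - v s) \<in> S" using A[THEN conjunct2, THEN conjunct2, rule_format, of u v "-1"] by simp
  show "v \<in> S \<Longrightarrow> (\<lambda>s. a * v s) \<in> S" using A[THEN conjunct2, THEN conjunct2, rule_format, of "\<lambda>s. 0" v a] A by simp
qed

lemma projectorD:
  assumes "projector X P"
  shows "is_op X P" "mmult X P P = P" "adj P = P"
  using assms unfolding projector_def by auto

lemma mapply_colv: "t \<subseteq> X \<Longrightarrow> mapply X A (colv X B t) = colv X (mmult X A B) t"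
  unfolding colv_def by (intro ext) (auto simp: mapply_eq mapply_out mmult_eq intro!: sum.cong)

lemma colv_eq_imp:
  assumes "is_op X A" "is_op X B" "\<And>t. t \<subseteq> X \<Longrightarrow> colv X A t = colv X B t"
  shows "A = B"
proof (intro ext)
  fix s t
  show "A s t = B s t"
  proof (cases "s \<subseteq> X \<and> t \<subseteq> X")
    case True
    hence "colv X A t s = colv X B t s" using assms(3) by simp
    thus ?thesis using True by (simp add: colv_def)
  qed (use assms(1,2) in \<open>auto simp: is_op_def\<close>)
qed

lemma img_mapply:
  assumes "projector X P" shows "mapply X P v \<in> img X P"
  unfolding img_def using projectorD[OF assms] by (simp flip: mapply_mmult)

lemma mmult_fix_img:
  assumes P: "projector X P" and B: "is_op X B" and H: "\<And>t. t \<subseteq> X \<Longrightarrow> colv X B t \<in> img X P"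
  shows "mmult X P B = B"
  by (rule colv_eq_imp) (use H B in \<open>auto simp: img_def simp flip: mapply_colv\<close>)

lemma proj_eq_of_img:
  assumes P: "projector X P" and P': "projector X P'" and I: "img X P = img X P'"
  shows "P = P'"
proof -
  have c: "colv X P t \<in> img X P" if "t \<subseteq> X" for t
    using img_mapply[OF P, of "colv X P t"] using that by (simp add: mapply_colv projectorD[OF P])
  have c': "colv X P' t \<in> img X P'" if "t \<subseteq> X" for t
    using img_mapply[OF P', of "colv X P' t"] using that by (simp add: mapply_colv projectorD[OF P'])
  have 1: "mmult X P' P = P" by (rule mmult_fix_img[OF P' projectorD(1)[OF P]]) (use c I in auto)
  have 2: "mmult X P P' = P'" by (rule mmult_fix_img[OF P projectorD(1)[OF P']]) (use c' I in auto)
  have "P = adj P" using projectorD(3)[OF P] by simp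
  also have "\<dots> = adj (mmult X P' P)" using 1 by simp
  also have "\<dots> = mmult X P P'" by (simp add: adj_mmult projectorD(3)[OF P] projectorD(3)[OF P'])
  also have "\<dots> = P'" by (rule 2)
  finally show ?thesis .
qed

lemma projector_positive:
  assumes P: "projector X P" shows "positive X P"
proof -
  have "qinner X v (mapply X P v) = qinner X (mapply X P v) (mapply X P v)" for v
  proof -
    have "qinner X v (mapply X P v) = qinner X v (mapply X P (mapply X P v))"
      by (simp flip: mapply_mmult add: projectorD(2)[OF P])
    also have "\<dots> = qinner X (mapply X P v) (mapply X P v)"
      by (subst qinner_mapply_adj) (simp add: projectorD(3)[OF P])
    finally show ?thesis .
  qed
  note eq = this
  show ?thesis unfolding positive_def
  proof (intro conjI allI impI)
    fix v
    show "qinner X v (mapply X P v) \<in> \<real>" unfolding eq qinner_self_real by simp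
    show "0 \<le> Re (qinner X v (mapply X P v))" unfolding eq by (rule qinner_self_nonneg)
  qed (rule projectorD(1)[OF P])
qed

lemma img_subsp: assumes "projector X P" shows "subsp X (img X P)"
  unfolding subsp_def img_def
proof (intro conjI allI impI ballI)
  show "(\<lambda>s. 0) \<in> {\<psi>. is_vec X \<psi> \<and> mapply X P \<psi> = \<psi>}"
    using mapply_scale_vec[of X P 0 "\<lambda>s. 0"] by (simp add: is_vec_def)
  fix a u v assume u: "u \<in> {\<psi>. is_vec X \<psi> \<and> mapply X P \<psi> = \<psi>}" and v: "v \<in> {\<psi>. is_vec X \<psi> \<and> mapply X P \<psi> = \<psi>}"
  show "(\<lambda>s. u s + a * v s) \<in> {\<psi>. is_vec X \<psi> \<and> mapply X P \<psi> = \<psi>}"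
    using u v by (simp add: mapply_add_vec mapply_scale_vec is_vec_def)
qed auto

definition zop :: qop where "zop = (\<lambda>s t. 0)"

lemma projector_zop: "projector X zop"
  unfolding projector_def zop_def is_op_def adj_def mmult_def by (auto intro!: ext)

lemma img_zop: "img X zop = {\<lambda>s. 0}"
proof -
  have "mapply X zop v = (\<lambda>s. 0)" for v unfolding zop_def mapply_def by auto
  thus ?thesis unfolding img_def by (auto simp: is_vec_def)
qed

lemma mmult_outer_left: "is_vec X w \<Longrightarrow> mmult X P (outer w w) = outer (mapply X P w) w"
  unfolding outer_def
  by (intro ext) (auto simp: mmult_def mapply_def is_vec_def sum_distrib_right mult.assoc)

lemma mmult_outer_right: "is_vec X w \<Longrightarrow> mmult X (outer w w) P = outer w (mapply X (adj P) w)"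
  unfolding outer_def
  by (intro ext) (auto simp: mmult_def mapply_def is_vec_def adj_def sum_distrib_left mult_ac)

lemma mmult_outer_outer: "is_vec X w \<Longrightarrow> mmult X (outer w w) (outer w w) = (\<lambda>s t. qinner X w w * outer w w s t)"
  unfolding outer_def
  by (intro ext) (auto simp: mmult_def qinner_def is_vec_def sum_distrib_left sum_distrib_right mult_ac)

lemma mapply_outer: "is_vec X w \<Longrightarrow> mapply X (outer w w) v = (\<lambda>s. qinner X w v * w s)"
  unfolding outer_def
  by (intro ext) (auto simp: mapply_def qinner_def is_vec_def sum_distrib_left mult_ac)

lemma adj_outer: "adj (outer w w) = outer w w"
  unfolding outer_def adj_def by (intro ext) (simp add: mult.commute)

lemma is_op_outer: "is_vec X w \<Longrightarrow> is_op X (outer w w)"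
  unfolding outer_def is_op_def is_vec_def by auto

lemma proj_exists_aux:
  assumes fin: "finite X" and S: "subsp X S" and C: "finite C" "C \<subseteq> Pow X"
  shows "\<exists>P. projector X P \<and> img X P = {v\<in>S. \<forall>s. v s \<noteq> 0 \<longrightarrow> s \<in> C}"
  using C
proof (induction C rule: finite_induct)
  case empty
  have "{v\<in>S. \<forall>s. v s \<noteq> 0 \<longrightarrow> s \<in> {}} = {\<lambda>s. 0}" using subspD(2)[OF S] by auto
  thus ?case using projector_zop img_zop by metis
next
  case (insert t C)
  from insert obtain P where P: "projector X P" and IP: "img X P = {v\<in>S. \<forall>s. v s \<noteq> 0 \<longrightarrow> s \<in> C}" by auto
  define SC' where "SC' = {v\<in>S. \<forall>s. v s \<noteq> 0 \<longrightarrow> s \<in> insert t C}"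
  have tX: "t \<subseteq> X" using insert by auto
  show ?case
  proof (cases "\<forall>v\<in>SC'. v t = 0")
    case True
    have "SC' = {v\<in>S. \<forall>s. v s \<noteq> 0 \<longrightarrow> s \<in> C}" unfolding SC'_def using True SC'_def by auto
    thus ?thesis using P IP SC'_def by auto
  next
    case False
    then obtain u where u: "u \<in> SC'" and ut: "u t \<noteq> 0" by auto
    have SC'sub: "subsp X SC'" unfolding subsp_def
    proof (intro conjI allI impI ballI)
      show "(\<lambda>s. 0) \<in> SC'" unfolding SC'_def using subspD(2)[OF S] by auto
      fix v assume "v \<in> SC'" thus "is_vec X v" unfolding SC'_def using subspD(1)[OF S] by auto
    next
      fix a u v assume u: "u \<in> SC'" and v: "v \<in> SC'"
      have "(\<lambda>s. u s + a * v s) \<in> S" using u v subspD(3)[OF S] unfolding SC'_def by auto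
      moreover have "\<forall>s. u s + a * v s \<noteq> 0 \<longrightarrow> s \<in> insert t C"
      proof (intro allI impI)
        fix s assume "u s + a * v s \<noteq> 0"
        hence "u s \<noteq> 0 \<or> v s \<noteq> 0" by auto
        thus "s \<in> insert t C" using u v unfolding SC'_def by blast
      qed
      ultimately show "(\<lambda>s. u s + a * v s) \<in> SC'" unfolding SC'_def by blast
    qed
    have PD: "is_op X P" "mmult X P P = P" "adj P = P" using projectorD[OF P] by auto
    have Pimg: "mapply X P v \<in> img X P" for v by (rule img_mapply[OF P])
    have sub: "img X P \<subseteq> SC'" unfolding IP SC'_def by auto
    define w where "w = (\<lambda>s. u s - mapply X P u s)"
    have wS: "w \<in> SC'" unfolding w_def using subspD(5)[OF SC'sub u] Pimg sub by auto
    have wv: "is_vec X w" using subspD(1)[OF SC'sub wS] .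
    have Put: "mapply X P u t = 0" using Pimg[of u] IP insert(2) by auto
    have wt: "w t \<noteq> 0" unfolding w_def using Put ut by simp
    have Pw: "mapply X P w = (\<lambda>s. 0)"
      unfolding w_def mapply_diff_vec by (simp flip: mapply_mmult add: PD)
    define nw where "nw = qinner X w w"
    have nw0: "nw \<noteq> 0" using qinner_self_zero[OF fin wv] wt unfolding nw_def by (metis)
    have nwR: "cnj nw = nw" unfolding nw_def by (simp add: qinner_self_real)
    define P' where "P' = (\<lambda>s t. P s t + (1/nw) * outer w w s t)"
    have zero_outer: "outer (\<lambda>s. 0) w = (\<lambda>s t. 0)" "outer w (\<lambda>s. 0) = (\<lambda>s t. 0)"
      unfolding outer_def by auto
    have mPW: "mmult X P (outer w w) = (\<lambda>s t. 0)" using mmult_outer_left[OF wv] Pw zero_outer by simp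
    have mWP: "mmult X (outer w w) P = (\<lambda>s t. 0)" using mmult_outer_right[OF wv] Pw zero_outer PD by simp
    have isop: "is_op X P'" unfolding P'_def using PD(1) is_op_outer[OF wv] by (auto simp: is_op_def)
    have idem: "mmult X P' P' = P'"
    proof -
      have "mmult X P' P' = (\<lambda>s t. mmult X P P s t + (1/nw) * mmult X P (outer w w) s t
           + ((1/nw) * mmult X (outer w w) P s t + (1/nw) * ((1/nw) * mmult X (outer w w) (outer w w) s t)))"
        unfolding P'_def mmult_add_left mmult_add_right mmult_scale_left mmult_scale_right by simp
      also have "\<dots> = P'" unfolding mPW mWP mmult_outer_outer[OF wv] PD(2) P'_def nw_def[symmetric]
        using nw0 by (intro ext) (simp add: field_simps)
      finally show ?thesis .
    qed
    have herm: "adj P' = P'"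
    proof (intro ext)
      fix s t
      have "cnj (P t s) = P s t" using fun_cong[OF fun_cong[OF PD(3)], of s t] unfolding adj_def .
      thus "adj P' s t = P' s t" unfolding P'_def adj_def outer_def using nwR by (simp add: mult.commute)
    qed
    have proj: "projector X P'" unfolding projector_def using isop idem herm by auto
    have mP': "mapply X P' v = (\<lambda>s. mapply X P v s + (1/nw) * (qinner X w v * w s))" for v
      unfolding P'_def mapply_add_op mapply_scale_op mapply_outer[OF wv] ..
    have "img X P' = SC'"
    proof
      show "img X P' \<subseteq> SC'"
      proof
        fix v assume "v \<in> img X P'"
        hence v: "is_vec X v" and vv: "mapply X P' v = v" unfolding img_def by auto
        have "(\<lambda>s. mapply X P v s + ((1/nw) * qinner X w v) * w s) \<in> SC'"
          by (rule subspD(3)[OF SC'sub _ wS]) (use Pimg sub in blast)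
        moreover have "(\<lambda>s. mapply X P v s + ((1/nw) * qinner X w v) * w s) = v"
          using vv unfolding mP' by (simp add: mult.assoc)
        ultimately show "v \<in> SC'" by simp
      qed
    next
      show "SC' \<subseteq> img X P'"
      proof
        fix v assume vS: "v \<in> SC'"
        define a where "a = v t / w t"
        define v' where "v' = (\<lambda>s. v s - a * w s)"
        have v'S: "v' \<in> SC'" unfolding v'_def using subspD(5)[OF SC'sub vS subspD(6)[OF SC'sub wS]] .
        have "v' t = 0" unfolding v'_def a_def using wt by simp
        hence "v' \<in> img X P" unfolding IP using v'S insert(2) unfolding SC'_def by auto
        hence Pv': "mapply X P v' = v'" unfolding img_def by auto
        have Pv: "mapply X P v = (\<lambda>s. v s - a * w s)"
        proof -
          have "v = (\<lambda>s. v' s + a * w s)" unfolding v'_def by simp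
          hence "mapply X P v = (\<lambda>s. mapply X P v' s + a * mapply X P w s)"
            by (metis mapply_add_vec mapply_scale_vec)
          thus ?thesis using Pv' Pw unfolding v'_def by simp
        qed
        have wv': "qinner X w v' = 0"
        proof -
          have "qinner X w v' = qinner X w (mapply X P v')" using Pv' by simp
          also have "\<dots> = qinner X (mapply X P w) v'" by (subst qinner_mapply_adj) (simp add: PD)
          also have "\<dots> = 0" using Pw by (simp add: qinner_def)
          finally show ?thesis .
        qed
        have "qinner X w v = qinner X w v' + a * nw"
        proof -
          have "v = (\<lambda>s. v' s + a * w s)" unfolding v'_def by simp
          hence "qinner X w v = qinner X w (\<lambda>s. v' s + a * w s)" by simp
          thus ?thesis unfolding qinner_add_right qinner_scale_right nw_def .
        qed
        hence wvv: "qinner X w v = a * nw" using wv' by simp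
        have "mapply X P' v = v" unfolding mP' Pv wvv using nw0 by (intro ext) simp
        moreover have "is_vec X v" using subspD(1)[OF SC'sub vS] .
        ultimately show "v \<in> img X P'" unfolding img_def by simp
      qed
    qed
    thus ?thesis using proj SC'_def by auto
  qed
qed

lemma proj_exists:
  assumes fin: "finite X" and S: "subsp X S"
  shows "\<exists>P. projector X P \<and> img X P = S"
proof -
  obtain P where "projector X P" "img X P = {v\<in>S. \<forall>s. v s \<noteq> 0 \<longrightarrow> s \<in> Pow X}"
    using proj_exists_aux[OF fin S, of "Pow X"] fin by auto
  moreover have "{v\<in>S. \<forall>s. v s \<noteq> 0 \<longrightarrow> s \<in> Pow X} = S"
    using subspD(1)[OF S] unfolding is_vec_def by auto
  ultimately show ?thesis by auto
qed

lemma Pow_split_img: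
  assumes "B \<subseteq> X"
  shows "Pow X = (\<lambda>(s,c). s \<union> c) ` (Pow B \<times> Pow (X - B))"
proof
  show "Pow X \<subseteq> (\<lambda>(s,c). s \<union> c) ` (Pow B \<times> Pow (X - B))"
  proof
    fix u assume "u \<in> Pow X"
    hence "u = (\<lambda>(s,c). s \<union> c) (u \<inter> B, u - B)" "(u \<inter> B, u - B) \<in> Pow B \<times> Pow (X - B)" by auto
    thus "u \<in> (\<lambda>(s,c). s \<union> c) ` (Pow B \<times> Pow (X - B))" by blast
  qed
qed (use assms in auto)

lemma Pow_split_inj:
  "inj_on (\<lambda>(s,c). s \<union> c) (Pow B \<times> Pow (X - B))"
proof (rule inj_onI, clarify)
  fix s c s' c'
  assume h: "s \<subseteq> B" "c \<subseteq> X - B" "s' \<subseteq> B" "c' \<subseteq> X - B" "s \<union> c = s' \<union> c'"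
  have "s = (s \<union> c) \<inter> B" "s' = (s' \<union> c') \<inter> B" "c = (s \<union> c) - B" "c' = (s' \<union> c') - B" using h by auto
  thus "s = s' \<and> c = c'" using h(5) by metis
qed

lemma sum_Pow_split:
  assumes fin: "finite X" and B: "B \<subseteq> X"
  shows "(\<Sum>u\<in>Pow X. f u) = (\<Sum>c\<in>Pow (X - B). \<Sum>s\<in>Pow B. f (s \<union> c))"
proof -
  have "(\<Sum>u\<in>Pow X. f u) = (\<Sum>p\<in>Pow B \<times> Pow (X - B). f ((\<lambda>(s,c). s \<union> c) p))"
    unfolding Pow_split_img[OF B] by (rule sum.reindex[OF Pow_split_inj, unfolded comp_def])
  also have "\<dots> = (\<Sum>s\<in>Pow B. \<Sum>c\<in>Pow (X - B). f (s \<union> c))"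
    by (subst sum.cartesian_product) (simp add: case_prod_beta)
  also have "\<dots> = (\<Sum>c\<in>Pow (X - B). \<Sum>s\<in>Pow B. f (s \<union> c))"
    by (rule sum.swap)
  finally show ?thesis .
qed

lemma un_split:
  assumes "s \<subseteq> B" "c \<subseteq> X - B" "B \<subseteq> X"
  shows "(s \<union> c) \<inter> B = s" "(s \<union> c) - B = c" "s \<union> c \<subseteq> X"
  using assms by auto

definition blk :: "nat set \<Rightarrow> nat set \<Rightarrow> nat set \<Rightarrow> qop \<Rightarrow> qop" where
  "blk B a b \<rho> = (\<lambda>s t. if s \<subseteq> B \<and> t \<subseteq> B then \<rho> (s \<union> a) (t \<union> b) else 0)"

lemma is_op_blk[simp]: "is_op B (blk B a b \<rho>)"
  unfolding is_op_def blk_def by auto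

lemma sext_blk: "sext V X E \<rho> = (\<lambda>s t. if s \<subseteq> X \<and> t \<subseteq> X then E (blk V (s - V) (t - V) \<rho>) (s \<inter> V) (t \<inter> V) else 0)"
  unfolding sext_def blk_def by simp

lemma is_op_ext[simp]: "is_op X (ext Y X A)"
  unfolding is_op_def ext_def by auto

lemma is_op_sext[simp]: "is_op X (sext V X E \<rho>)"
  unfolding is_op_def sext_def by auto

lemma ext_split:
  assumes "s \<subseteq> Y" "c \<subseteq> X - Y" "t \<subseteq> Y" "d \<subseteq> X - Y" "Y \<subseteq> X"
  shows "ext Y X A (s \<union> c) (t \<union> d) = (if c = d then A s t else 0)"
  using un_split[OF assms(1,2,5)] un_split[OF assms(3,4,5)] unfolding ext_def by auto

lemma trace_split:
  assumes fin: "finite X" and Y: "Y \<subseteq> X"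
  shows "qtrace X \<sigma> = (\<Sum>c\<in>Pow (X - Y). qtrace Y (blk Y c c \<sigma>))"
  unfolding qtrace_def sum_Pow_split[OF fin Y]
  by (intro sum.cong refl) (auto simp: blk_def)

lemma trace_ext_split:
  assumes fin: "finite X" and Y: "Y \<subseteq> X"
  shows "qtrace X (mmult X (ext Y X A) \<sigma>) = (\<Sum>c\<in>Pow (X - Y). qtrace Y (mmult Y A (blk Y c c \<sigma>)))"
  unfolding qtrace_def sum_Pow_split[OF fin Y]
proof (intro sum.cong refl)
  fix c s assume c: "c \<in> Pow (X - Y)" and s: "s \<in> Pow Y"
  have finY: "finite (Pow (X - Y))" using fin by simp
  have "mmult X (ext Y X A) \<sigma> (s \<union> c) (s \<union> c) = (\<Sum>u\<in>Pow X. ext Y X A (s \<union> c) u * \<sigma> u (s \<union> c))"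
    using un_split[of s Y c X] c s Y by (simp add: mmult_eq)
  also have "\<dots> = (\<Sum>d\<in>Pow (X - Y). \<Sum>t\<in>Pow Y. ext Y X A (s \<union> c) (t \<union> d) * \<sigma> (t \<union> d) (s \<union> c))"
    by (rule sum_Pow_split[OF fin Y])
  also have "\<dots> = (\<Sum>d\<in>Pow (X - Y). if d = c then (\<Sum>t\<in>Pow Y. A s t * \<sigma> (t \<union> c) (s \<union> c)) else 0)"
    by (intro sum.cong refl) (use c s Y in \<open>auto simp: ext_split\<close>)
  also have "\<dots> = (\<Sum>t\<in>Pow Y. A s t * \<sigma> (t \<union> c) (s \<union> c))"
    using c finY by (simp add: sum.delta)
  also have "\<dots> = mmult Y A (blk Y c c \<sigma>) s s"
    using s by (simp add: mmult_eq blk_def)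
  finally show "mmult X (ext Y X A) \<sigma> (s \<union> c) (s \<union> c) = mmult Y A (blk Y c c \<sigma>) s s" .
qed

lemma DProgD:
  assumes "DProg V E"
  shows "is_op V A \<Longrightarrow> is_op V (E A)"
    "is_op V A \<Longrightarrow> is_op V B \<Longrightarrow> E (\<lambda>s t. A s t + B s t) = (\<lambda>s t. E A s t + E B s t)"
    "is_op V A \<Longrightarrow> E (\<lambda>s t. c * A s t) = (\<lambda>s t. c * E A s t)"
    "finite X \<Longrightarrow> V \<subseteq> X \<Longrightarrow> positive X \<rho> \<Longrightarrow> positive X (sext V X E \<rho>)"
    "positive V \<rho> \<Longrightarrow> Re (qtrace V (E \<rho>)) \<le> Re (qtrace V \<rho>)"
proof -
  note d = assms[unfolded DProg_def]
  show "is_op V A \<Longrightarrow> is_op V (E A)" using d[THEN conjunct1] by blast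
  show "is_op V A \<Longrightarrow> is_op V B \<Longrightarrow> E (\<lambda>s t. A s t + B s t) = (\<lambda>s t. E A s t + E B s t)"
    using d[THEN conjunct2, THEN conjunct1] by blast
  show "is_op V A \<Longrightarrow> E (\<lambda>s t. c * A s t) = (\<lambda>s t. c * E A s t)"
    using d[THEN conjunct2, THEN conjunct2, THEN conjunct1] by blast
  show "finite X \<Longrightarrow> V \<subseteq> X \<Longrightarrow> positive X \<rho> \<Longrightarrow> positive X (sext V X E \<rho>)"
    using d[THEN conjunct2, THEN conjunct2, THEN conjunct2, THEN conjunct1] by blast
  show "positive V \<rho> \<Longrightarrow> Re (qtrace V (E \<rho>)) \<le> Re (qtrace V \<rho>)"
    using d[THEN conjunct2, THEN conjunct2, THEN conjunct2, THEN conjunct2] by blast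
qed

lemma blk_sext:
  assumes VY: "V \<subseteq> Y" and YX: "Y \<subseteq> X" and c: "c \<subseteq> X - Y"
  shows "blk Y c c (sext V X E \<rho>) = sext V Y E (blk Y c c \<rho>)"
proof (intro ext)
  fix s t
  show "blk Y c c (sext V X E \<rho>) s t = sext V Y E (blk Y c c \<rho>) s t"
  proof (cases "s \<subseteq> Y \<and> t \<subseteq> Y")
    case True
    have i1: "(s \<union> c) \<inter> V = s \<inter> V" "(t \<union> c) \<inter> V = t \<inter> V" using c VY by auto
    have i2: "(s \<union> c) - V = (s - V) \<union> c" "(t \<union> c) - V = (t - V) \<union> c" using c VY by auto
    have i3: "s \<union> c \<subseteq> X" "t \<union> c \<subseteq> X" using True c YX by auto
    have b: "blk V (s - V \<union> c) (t - V \<union> c) \<rho> = blk V (s - V) (t - V) (blk Y c c \<rho>)"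
    proof (intro ext)
      fix s' t'
      show "blk V (s - V \<union> c) (t - V \<union> c) \<rho> s' t' = blk V (s - V) (t - V) (blk Y c c \<rho>) s' t'"
      proof (cases "s' \<subseteq> V \<and> t' \<subseteq> V")
        case True
        hence "s' \<union> (s - V) \<subseteq> Y \<and> t' \<union> (t - V) \<subseteq> Y" using \<open>s \<subseteq> Y \<and> t \<subseteq> Y\<close> VY by blast
        thus ?thesis using True unfolding blk_def by (simp add: Un_assoc)
      next
        case False thus ?thesis unfolding blk_def by (simp only: if_not_P if_False)
      qed
    qed
    have "blk Y c c (sext V X E \<rho>) s t = sext V X E \<rho> (s \<union> c) (t \<union> c)"
      using True unfolding blk_def by (simp only: if_P)
    also have "\<dots> = E (blk V ((s \<union> c) - V) ((t \<union> c) - V) \<rho>) ((s \<union> c) \<inter> V) ((t \<union> c) \<inter> V)"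
      using i3 unfolding sext_blk by (simp only: if_P conj_absorb simp_thms)
    also have "\<dots> = E (blk V (s - V) (t - V) (blk Y c c \<rho>)) (s \<inter> V) (t \<inter> V)"
      unfolding i1 i2 b ..
    also have "\<dots> = sext V Y E (blk Y c c \<rho>) s t"
      using True unfolding sext_blk by (simp only: if_P)
    finally show ?thesis .
  next
    case False
    have 1: "blk Y c c (sext V X E \<rho>) s t = 0" using False unfolding blk_def by (simp only: if_not_P if_False)
    have 2: "sext V Y E (blk Y c c \<rho>) s t = 0" using False unfolding sext_blk by (simp only: if_not_P if_False)
    show ?thesis using 1 2 by simp
  qed
qed

lemma bilin_sum: "qinner X u (mapply X A w) = (\<Sum>s\<in>Pow X. \<Sum>t\<in>Pow X. cnj (u s) * A s t * w t)"
  unfolding qinner_def by (intro sum.cong refl) (simp add: mapply_eq sum_distrib_left mult.assoc)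

definition liftv :: "nat set \<Rightarrow> nat set \<Rightarrow> nat set \<Rightarrow> qvec \<Rightarrow> qvec" where
  "liftv Y X c v = (\<lambda>u. if u \<subseteq> X \<and> u - Y = c then v (u \<inter> Y) else 0)"

lemma liftv_split:
  assumes "s \<subseteq> Y" "d \<subseteq> X - Y" "Y \<subseteq> X"
  shows "liftv Y X c v (s \<union> d) = (if d = c then v s else 0)"
  using un_split[OF assms] unfolding liftv_def by auto

lemma is_vec_liftv: "is_vec X (liftv Y X c v)"
  unfolding is_vec_def liftv_def by auto

lemma blk_positive_inner:
  assumes fin: "finite X" and YX: "Y \<subseteq> X" and c: "c \<subseteq> X - Y" and d: "d \<subseteq> X - Y" and s: "s \<subseteq> Y"
  shows "(\<Sum>e\<in>Pow (X - Y). \<Sum>t\<in>Pow Y. cnj (liftv Y X c v (s \<union> d)) * \<rho> (s \<union> d) (t \<union> e) * liftv Y X c v (t \<union> e))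
     = (if d = c then (\<Sum>t\<in>Pow Y. cnj (v s) * \<rho> (s \<union> c) (t \<union> c) * v t) else 0)"
proof (cases "d = c")
  case False
  thus ?thesis using liftv_split[OF s d YX] by simp
next
  case True
  have finP: "finite (Pow (X - Y))" using fin by simp
  have "(\<Sum>e\<in>Pow (X - Y). \<Sum>t\<in>Pow Y. cnj (liftv Y X c v (s \<union> d)) * \<rho> (s \<union> d) (t \<union> e) * liftv Y X c v (t \<union> e))
      = (\<Sum>e\<in>Pow (X - Y). if e = c then (\<Sum>t\<in>Pow Y. cnj (v s) * \<rho> (s \<union> c) (t \<union> c) * v t) else 0)"
  proof (intro sum.cong refl)
    fix e assume e: "e \<in> Pow (X - Y)"
    show "(\<Sum>t\<in>Pow Y. cnj (liftv Y X c v (s \<union> d)) * \<rho> (s \<union> d) (t \<union> e) * liftv Y X c v (t \<union> e))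
      = (if e = c then (\<Sum>t\<in>Pow Y. cnj (v s) * \<rho> (s \<union> c) (t \<union> c) * v t) else 0)"
    proof (cases "e = c")
      case True
      have vs: "liftv Y X c v (s \<union> c) = v s" using liftv_split[OF s c YX] by simp
      show ?thesis unfolding True \<open>d = c\<close> vs if_P[OF refl]
        by (intro sum.cong refl) (simp add: liftv_split[OF _ c YX])
    next
      case False
      have e': "e \<subseteq> X - Y" using e by simp
      have "(\<Sum>t\<in>Pow Y. cnj (liftv Y X c v (s \<union> d)) * \<rho> (s \<union> d) (t \<union> e) * liftv Y X c v (t \<union> e)) = 0"
        by (intro sum.neutral ballI) (simp add: liftv_split[OF _ e' YX] False)
      thus ?thesis using False by simp
    qed
  qed
  also have "\<dots> = (\<Sum>t\<in>Pow Y. cnj (v s) * \<rho> (s \<union> c) (t \<union> c) * v t)"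
    using c finP by (simp add: sum.delta)
  finally show ?thesis using True by simp
qed

lemma blk_positive:
  assumes fin: "finite X" and YX: "Y \<subseteq> X" and c: "c \<subseteq> X - Y" and P: "positive X \<rho>"
  shows "positive Y (blk Y c c \<rho>)"
proof -
  have finP: "finite (Pow (X - Y))" using fin by simp
  have key: "qinner Y v (mapply Y (blk Y c c \<rho>) v) = qinner X (liftv Y X c v) (mapply X \<rho> (liftv Y X c v))" for v
  proof -
    let ?v = "liftv Y X c v"
    have "qinner X ?v (mapply X \<rho> ?v) = (\<Sum>d\<in>Pow (X - Y). \<Sum>s\<in>Pow Y. \<Sum>e\<in>Pow (X - Y). \<Sum>t\<in>Pow Y.
             cnj (?v (s \<union> d)) * \<rho> (s \<union> d) (t \<union> e) * ?v (t \<union> e))"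
      unfolding bilin_sum sum_Pow_split[OF fin YX] ..
    also have "\<dots> = (\<Sum>d\<in>Pow (X - Y). \<Sum>s\<in>Pow Y. if d = c then
             (\<Sum>t\<in>Pow Y. cnj (v s) * \<rho> (s \<union> c) (t \<union> c) * v t) else 0)"
      by (intro sum.cong refl blk_positive_inner[OF fin YX c]) auto
    also have "\<dots> = (\<Sum>d\<in>Pow (X - Y). if d = c then (\<Sum>s\<in>Pow Y.
             (\<Sum>t\<in>Pow Y. cnj (v s) * \<rho> (s \<union> c) (t \<union> c) * v t)) else 0)"
      by (intro sum.cong refl) simp
    also have "\<dots> = (\<Sum>s\<in>Pow Y. \<Sum>t\<in>Pow Y. cnj (v s) * \<rho> (s \<union> c) (t \<union> c) * v t)"
      using c finP by (simp add: sum.delta)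
    also have "\<dots> = qinner Y v (mapply Y (blk Y c c \<rho>) v)"
      unfolding bilin_sum by (intro sum.cong refl) (simp add: blk_def)
    finally show ?thesis by simp
  qed
  show ?thesis unfolding positive_def
    using key positiveD(1,2)[OF P is_vec_liftv] by auto
qed

lemma sext_self:
  assumes D: "DProg V E" and A: "is_op V A"
  shows "sext V V E A = E A"
proof (intro ext)
  fix s t
  show "sext V V E A s t = E A s t"
  proof (cases "s \<subseteq> V \<and> t \<subseteq> V")
    case True
    have e: "s - V = {}" "t - V = {}" using True by auto
    have "blk V (s - V) (t - V) A = A" unfolding e using A unfolding blk_def is_op_def by (intro ext) auto
    thus ?thesis using True by (simp add: sext_blk Int_absorb2)
  next
    case False
    thus ?thesis using DProgD(1)[OF D A] by (auto simp: sext_blk is_op_def)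
  qed
qed

lemma ext_self: "is_op Y A \<Longrightarrow> ext Y Y A = A"
  unfolding ext_def is_op_def by (intro ext) (auto simp: Int_absorb2)

lemma sext_trace_le:
  assumes fin: "finite X" and D: "DProg V E" and VX: "V \<subseteq> X" and P: "positive X \<rho>"
  shows "Re (qtrace X (sext V X E \<rho>)) \<le> Re (qtrace X \<rho>)"
proof -
  have "Re (qtrace X (sext V X E \<rho>)) = (\<Sum>c\<in>Pow (X - V). Re (qtrace V (blk V c c (sext V X E \<rho>))))"
    unfolding trace_split[OF fin VX] by simp
  also have "\<dots> = (\<Sum>c\<in>Pow (X - V). Re (qtrace V (E (blk V c c \<rho>))))"
    by (intro sum.cong refl) (simp add: blk_sext[OF order_refl VX] sext_self[OF D])
  also have "\<dots> \<le> (\<Sum>c\<in>Pow (X - V). Re (qtrace V (blk V c c \<rho>)))"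
    by (intro sum_mono DProgD(5)[OF D] blk_positive[OF fin VX _ P]) auto
  also have "\<dots> = Re (qtrace X \<rho>)"
    unfolding trace_split[OF fin VX] by simp
  finally show ?thesis .
qed

lemma ext_first:
  assumes "s \<subseteq> X" "u \<subseteq> Y" "d \<subseteq> X - Y" "Y \<subseteq> X"
  shows "ext Y X A s (u \<union> d) = (if s - Y = d then A (s \<inter> Y) u else 0)"
  using un_split[OF assms(2,3,4)] assms(1) unfolding ext_def by auto

lemma ext_second:
  assumes "t \<subseteq> X" "u \<subseteq> Y" "d \<subseteq> X - Y" "Y \<subseteq> X"
  shows "ext Y X A (u \<union> d) t = (if d = t - Y then A u (t \<inter> Y) else 0)"
  using un_split[OF assms(2,3,4)] assms(1) unfolding ext_def by auto

lemma ext_mmult: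
  assumes fin: "finite X" and YX: "Y \<subseteq> X"
  shows "ext Y X (mmult Y A B) = mmult X (ext Y X A) (ext Y X B)"
proof (intro ext)
  fix s t
  show "ext Y X (mmult Y A B) s t = mmult X (ext Y X A) (ext Y X B) s t"
  proof (cases "s \<subseteq> X \<and> t \<subseteq> X")
    case True
    have finP: "finite (Pow (X - Y))" using fin by simp
    have sd: "s - Y \<in> Pow (X - Y)" using True by auto
    have "mmult X (ext Y X A) (ext Y X B) s t = (\<Sum>u\<in>Pow X. ext Y X A s u * ext Y X B u t)"
      using True by (simp add: mmult_eq)
    also have "\<dots> = (\<Sum>d\<in>Pow (X - Y). \<Sum>u\<in>Pow Y. ext Y X A s (u \<union> d) * ext Y X B (u \<union> d) t)"
      by (rule sum_Pow_split[OF fin YX])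
    also have "\<dots> = (\<Sum>d\<in>Pow (X - Y). if s - Y = d then (\<Sum>u\<in>Pow Y. A (s \<inter> Y) u * (if s - Y = t - Y then B u (t \<inter> Y) else 0)) else 0)"
      by (intro sum.cong refl) (use True YX in \<open>auto simp: ext_first ext_second\<close>)
    also have "\<dots> = (\<Sum>u\<in>Pow Y. A (s \<inter> Y) u * (if s - Y = t - Y then B u (t \<inter> Y) else 0))"
      using finP sd by (simp add: sum.delta)
    also have "\<dots> = ext Y X (mmult Y A B) s t"
      using True unfolding ext_def by (auto simp: mmult_eq)
    finally show ?thesis ..
  next
    case False
    thus ?thesis unfolding ext_def mmult_def by auto
  qed
qed

lemma adj_ext: "adj (ext Y X A) = ext Y X (adj A)"
  unfolding adj_def ext_def by (intro ext) auto

lemma ext_lin: "ext Y X (\<lambda>s t. A s t + c * B s t) = (\<lambda>s t. ext Y X A s t + c * ext Y X B s t)"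
  unfolding ext_def by (intro ext) auto

lemma ext_diff: "ext Y X (\<lambda>s t. A s t - B s t) = (\<lambda>s t. ext Y X A s t - ext Y X B s t)"
  unfolding ext_def by (intro ext) auto

lemma ext_idop: "Y \<subseteq> X \<Longrightarrow> ext Y X (idop Y) = idop X"
proof (intro ext)
  fix s t assume YX: "Y \<subseteq> X"
  have "s \<subseteq> X \<Longrightarrow> t \<subseteq> X \<Longrightarrow> s - Y = t - Y \<Longrightarrow> s \<inter> Y = t \<inter> Y \<Longrightarrow> s = t" by blast
  thus "ext Y X (idop Y) s t = idop X s t" unfolding ext_def idop_def by auto
qed

lemma projector_ext:
  assumes fin: "finite X" and YX: "Y \<subseteq> X" and P: "projector Y P"
  shows "projector X (ext Y X P)"
  unfolding projector_def
  using projectorD[OF P] by (simp add: ext_mmult[OF fin YX, symmetric] adj_ext)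

lemma proj_compl_eq: "is_op X P \<Longrightarrow> proj_compl X P = (\<lambda>s t. idop X s t - P s t)"
  unfolding proj_compl_def idop_def is_op_def by (intro ext) auto

lemma projector_compl:
  assumes fin: "finite X" and P: "projector X P"
  shows "projector X (proj_compl X P)"
proof -
  note PD = projectorD[OF P]
  have "mmult X (\<lambda>s t. idop X s t - P s t) (\<lambda>s t. idop X s t - P s t) = (\<lambda>s t. idop X s t - P s t)"
    unfolding mmult_diff_left mmult_diff_right mmult_idop_left[OF fin is_op_idop] mmult_idop_left[OF fin PD(1)]
      mmult_idop_right[OF fin PD(1)] PD(2) by simp
  moreover have "adj (\<lambda>s t. idop X s t - P s t) = (\<lambda>s t. idop X s t - P s t)"
    using PD(3) adj_idop[of X] unfolding adj_def by (intro ext) (metis complex_cnj_diff)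
  moreover have "is_op X (\<lambda>s t. idop X s t - P s t)" using PD(1) unfolding is_op_def idop_def by auto
  ultimately show ?thesis unfolding projector_def proj_compl_eq[OF PD(1)] by simp
qed

lemma blk_lin: "blk V a b (\<lambda>s t. \<rho> s t + c * \<sigma> s t) = (\<lambda>s t. blk V a b \<rho> s t + c * blk V a b \<sigma> s t)"
  unfolding blk_def by (intro ext) auto

lemma blk_scale: "blk V a b (\<lambda>s t. c * \<sigma> s t) = (\<lambda>s t. c * blk V a b \<sigma> s t)"
  unfolding blk_def by (intro ext) auto

lemma E_lin:
  assumes D: "DProg V E" and A: "is_op V A" and B: "is_op V B"
  shows "E (\<lambda>s t. A s t + c * B s t) = (\<lambda>s t. E A s t + c * E B s t)"
proof -
  have B': "is_op V (\<lambda>s t. c * B s t)" using B unfolding is_op_def by auto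
  show ?thesis using DProgD(2)[OF D A B'] DProgD(3)[OF D B] by simp
qed

lemma sext_lin:
  assumes D: "DProg V E"
  shows "sext V X E (\<lambda>s t. \<rho> s t + c * \<sigma> s t) = (\<lambda>s t. sext V X E \<rho> s t + c * sext V X E \<sigma> s t)"
  unfolding sext_blk blk_lin E_lin[OF D is_op_blk is_op_blk] by (intro ext) auto

lemma sext_scale:
  assumes D: "DProg V E"
  shows "sext V X E (\<lambda>s t. c * \<sigma> s t) = (\<lambda>s t. c * sext V X E \<sigma> s t)"
  unfolding sext_blk blk_scale DProgD(3)[OF D is_op_blk] by (intro ext) auto

lemma sext_zero:
  assumes D: "DProg V E"
  shows "sext V X E (\<lambda>s t. 0) = (\<lambda>s t. 0)"
  using sext_scale[OF D, of X 0 "\<lambda>s t. 0"] by simp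

lemma sext_add:
  assumes D: "DProg V E"
  shows "sext V X E (\<lambda>s t. \<rho> s t + \<sigma> s t) = (\<lambda>s t. sext V X E \<rho> s t + sext V X E \<sigma> s t)"
  using sext_lin[OF D, of X \<rho> 1 \<sigma>] by simp

lemma sext_diff:
  assumes D: "DProg V E"
  shows "sext V X E (\<lambda>s t. \<rho> s t - \<sigma> s t) = (\<lambda>s t. sext V X E \<rho> s t - sext V X E \<sigma> s t)"
  using sext_lin[OF D, of X \<rho> "-1" \<sigma>] by simp

lemma sext_sum:
  assumes D: "DProg V E" and fin: "finite I"
  shows "sext V X E (\<lambda>s t. \<Sum>i\<in>I. f i s t) = (\<lambda>s t. \<Sum>i\<in>I. sext V X E (f i) s t)"
  using fin
proof (induction I rule: finite_induct)
  case empty thus ?case using sext_zero[OF D] by simp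
next
  case (insert i I)
  thus ?case using sext_add[OF D, of X "f i" "\<lambda>s t. \<Sum>i\<in>I. f i s t"] by simp
qed

definition eop :: "nat set \<Rightarrow> nat set \<Rightarrow> qop" where
  "eop s t = (\<lambda>a b. if a = s \<and> b = t then 1 else 0)"

lemma is_op_eop: "s \<subseteq> Y \<Longrightarrow> t \<subseteq> Y \<Longrightarrow> is_op Y (eop s t)"
  unfolding is_op_def eop_def by auto

lemma op_decomp:
  assumes fin: "finite Y" and A: "is_op Y A"
  shows "A = (\<lambda>a b. \<Sum>p\<in>Pow Y \<times> Pow Y. A (fst p) (snd p) * eop (fst p) (snd p) a b)"
proof (intro ext)
  fix a b
  have "(\<Sum>p\<in>Pow Y \<times> Pow Y. A (fst p) (snd p) * eop (fst p) (snd p) a b)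
      = (\<Sum>p\<in>Pow Y \<times> Pow Y. if p = (a, b) then A a b else 0)"
    by (intro sum.cong refl) (auto simp: eop_def)
  also have "\<dots> = A a b"
    using fin A unfolding is_op_def by (simp add: sum.delta)
  finally show "A a b = (\<Sum>p\<in>Pow Y \<times> Pow Y. A (fst p) (snd p) * eop (fst p) (snd p) a b)" ..
qed

lemma trace_mmult_sum_left:
  assumes "finite P"
  shows "qtrace Y (mmult Y (\<lambda>a b. \<Sum>p\<in>P. f p a b) B) = (\<Sum>p\<in>P. qtrace Y (mmult Y (f p) B))"
  using assms
proof (induction P rule: finite_induct)
  case empty
  have "mmult Y (\<lambda>a b. 0) B = (\<lambda>a b. 0 * mmult Y (\<lambda>a b. 0) B a b)"
    using mmult_scale_left[of Y 0 "\<lambda>a b. 0" B] by simp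
  thus ?case by (simp add: qtrace_def)
next
  case (insert p P)
  have "qtrace Y (mmult Y (\<lambda>a b. \<Sum>p\<in>insert p P. f p a b) B)
      = qtrace Y (mmult Y (\<lambda>a b. f p a b + (\<Sum>p\<in>P. f p a b)) B)"
    using insert by simp
  also have "\<dots> = qtrace Y (mmult Y (f p) B) + qtrace Y (mmult Y (\<lambda>a b. \<Sum>p\<in>P. f p a b) B)"
    unfolding mmult_add_left qtrace_add by simp
  finally show ?case using insert by simp
qed

lemma trace_eop:
  assumes fin: "finite Y" and s: "s \<subseteq> Y" and t: "t \<subseteq> Y"
  shows "qtrace Y (mmult Y (eop s t) G) = G t s"
proof -
  have "qtrace Y (mmult Y (eop s t) G) = (\<Sum>a\<in>Pow Y. if a = s then G t a else 0)"
    unfolding qtrace_def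
  proof (intro sum.cong refl)
    fix a assume a: "a \<in> Pow Y"
    have "mmult Y (eop s t) G a a = (\<Sum>r\<in>Pow Y. if r = t then (if a = s then G r a else 0) else 0)"
      using a by (simp add: mmult_eq eop_def) (intro sum.cong refl, auto)
    also have "\<dots> = (if a = s then G t a else 0)" using fin t by (simp add: sum.delta)
    finally show "mmult Y (eop s t) G a a = (if a = s then G t a else 0)" .
  qed
  also have "\<dots> = G t s" using fin s by (simp add: sum.delta)
  finally show ?thesis .
qed

definition adjw :: "nat set \<Rightarrow> qsop \<Rightarrow> qop \<Rightarrow> qop" where
  "adjw Y F B = (\<lambda>t s. if t \<subseteq> Y \<and> s \<subseteq> Y then qtrace Y (mmult Y (F (eop s t)) B) else 0)"

lemma adjw_prop:
  assumes fin: "finite Y" and D: "DProg V E" and A: "is_op Y A"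
  shows "qtrace Y (mmult Y (sext V Y E A) B) = qtrace Y (mmult Y A (adjw Y (sext V Y E) B))"
proof -
  let ?F = "sext V Y E"
  let ?P = "Pow Y \<times> Pow Y"
  have finP: "finite ?P" using fin by simp
  have "?F A = ?F (\<lambda>a b. \<Sum>p\<in>?P. A (fst p) (snd p) * eop (fst p) (snd p) a b)"
    by (subst op_decomp[OF fin A]) (rule refl)
  also have "\<dots> = (\<lambda>a b. \<Sum>p\<in>?P. A (fst p) (snd p) * ?F (eop (fst p) (snd p)) a b)"
    unfolding sext_sum[OF D finP] sext_scale[OF D] ..
  finally have FA: "?F A = (\<lambda>a b. \<Sum>p\<in>?P. A (fst p) (snd p) * ?F (eop (fst p) (snd p)) a b)" .
  have "qtrace Y (mmult Y (?F A) B) = (\<Sum>p\<in>?P. qtrace Y (mmult Y (\<lambda>a b. A (fst p) (snd p) * ?F (eop (fst p) (snd p)) a b) B))"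
    unfolding FA by (rule trace_mmult_sum_left[OF finP])
  also have "\<dots> = (\<Sum>p\<in>?P. A (fst p) (snd p) * adjw Y ?F B (snd p) (fst p))"
    by (intro sum.cong refl) (auto simp: mmult_scale_left qtrace_scale adjw_def)
  also have "\<dots> = (\<Sum>s\<in>Pow Y. \<Sum>t\<in>Pow Y. A s t * adjw Y ?F B t s)"
    by (subst sum.cartesian_product) (simp add: case_prod_beta)
  also have "\<dots> = qtrace Y (mmult Y A (adjw Y ?F B))"
    unfolding qtrace_def by (intro sum.cong refl) (simp add: mmult_eq)
  finally show ?thesis .
qed

lemma is_op_adjw: "is_op Y (adjw Y F B)"
  unfolding is_op_def adjw_def by auto

lemma sadj_eq:
  assumes fin: "finite Y" and D: "DProg V E"
  shows "sadj Y (sext V Y E) B = adjw Y (sext V Y E) B"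
  unfolding sadj_def
proof (rule the_equality)
  show "is_op Y (adjw Y (sext V Y E) B) \<and>
    (\<forall>A. is_op Y A \<longrightarrow> qtrace Y (mmult Y (sext V Y E A) B) = qtrace Y (mmult Y A (adjw Y (sext V Y E) B)))"
    using adjw_prop[OF fin D] is_op_adjw by blast
next
  fix G assume G: "is_op Y G \<and> (\<forall>A. is_op Y A \<longrightarrow> qtrace Y (mmult Y (sext V Y E A) B) = qtrace Y (mmult Y A G))"
  show "G = adjw Y (sext V Y E) B"
  proof (intro ext)
    fix t s
    show "G t s = adjw Y (sext V Y E) B t s"
    proof (cases "t \<subseteq> Y \<and> s \<subseteq> Y")
      case True
      have "G t s = qtrace Y (mmult Y (eop s t) G)" using trace_eop[OF fin] True by simp
      also have "\<dots> = qtrace Y (mmult Y (sext V Y E (eop s t)) B)" using G is_op_eop True by metis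
      also have "\<dots> = adjw Y (sext V Y E) B t s" using True by (simp add: adjw_def)
      finally show ?thesis .
    next
      case False thus ?thesis using G unfolding is_op_def adjw_def by auto
    qed
  qed
qed

lemma lift_trace:
  assumes fin: "finite X" and YX: "Y \<subseteq> X" and VY: "V \<subseteq> Y" and D: "DProg V E"
  shows "qtrace X (mmult X (ext Y X B) (sext V X E \<rho>)) = qtrace X (mmult X (ext Y X (sadj Y (sext V Y E) B)) \<rho>)"
proof -
  have finY: "finite Y" using fin YX finite_subset by auto
  let ?G = "sadj Y (sext V Y E) B"
  have "qtrace X (mmult X (ext Y X B) (sext V X E \<rho>)) = (\<Sum>c\<in>Pow (X - Y). qtrace Y (mmult Y B (blk Y c c (sext V X E \<rho>))))"
    by (rule trace_ext_split[OF fin YX])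
  also have "\<dots> = (\<Sum>c\<in>Pow (X - Y). qtrace Y (mmult Y (sext V Y E (blk Y c c \<rho>)) B))"
    by (intro sum.cong refl) (simp add: blk_sext[OF VY YX] qtrace_mmult_comm[of Y B])
  also have "\<dots> = (\<Sum>c\<in>Pow (X - Y). qtrace Y (mmult Y ?G (blk Y c c \<rho>)))"
    by (intro sum.cong refl) (simp add: sadj_eq[OF finY D] adjw_prop[OF finY D is_op_blk] qtrace_mmult_comm[of Y "blk Y _ _ \<rho>"])
  also have "\<dots> = qtrace X (mmult X (ext Y X ?G) \<rho>)"
    by (rule trace_ext_split[OF fin YX, symmetric])
  finally show ?thesis .
qed

lemma img_subsp_any: "subsp X (img X A)"
  unfolding subsp_def img_def
proof (intro conjI allI impI ballI)
  show "(\<lambda>s. 0) \<in> {\<psi>. is_vec X \<psi> \<and> mapply X A \<psi> = \<psi>}"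
    using mapply_scale_vec[of X A 0 "\<lambda>s. 0"] by (simp add: is_vec_def)
  fix a u v assume u: "u \<in> {\<psi>. is_vec X \<psi> \<and> mapply X A \<psi> = \<psi>}" and v: "v \<in> {\<psi>. is_vec X \<psi> \<and> mapply X A \<psi> = \<psi>}"
  show "(\<lambda>s. u s + a * v s) \<in> {\<psi>. is_vec X \<psi> \<and> mapply X A \<psi> = \<psi>}"
    using u v by (simp add: mapply_add_vec mapply_scale_vec is_vec_def)
qed auto

lemma trace_outer: "is_vec X \<psi> \<Longrightarrow> qtrace X (mmult X A (outer \<psi> \<psi>)) = qinner X \<psi> (mapply X A \<psi>)"
  unfolding qtrace_def qinner_def
  by (intro sum.cong refl) (auto simp: mmult_eq mapply_eq outer_def sum_distrib_left mult_ac)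

lemma qtrace_outer: "is_vec X \<psi> \<Longrightarrow> qtrace X (outer \<psi> \<psi>) = qinner X \<psi> \<psi>"
  unfolding qtrace_def qinner_def outer_def by (simp add: mult.commute)

lemma outer_positive:
  assumes v: "is_vec X \<psi>" and c: "c \<in> \<real>" "0 \<le> Re c"
  shows "positive X (\<lambda>s t. c * outer \<psi> \<psi> s t)"
  unfolding positive_def
proof (intro conjI allI impI)
  show "is_op X (\<lambda>s t. c * outer \<psi> \<psi> s t)" using is_op_outer[OF v] unfolding is_op_def by auto
  fix u assume u: "is_vec X u"
  have e: "qinner X u (mapply X (\<lambda>s t. c * outer \<psi> \<psi> s t) u) = c * (qinner X u \<psi> * qinner X \<psi> u)"
    unfolding mapply_scale_op mapply_outer[OF v] qinner_scale_right
    using qinner_scale_right[of X u "qinner X \<psi> u" \<psi>] by simp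
  have r: "qinner X u \<psi> * qinner X \<psi> u = complex_of_real ((cmod (qinner X \<psi> u))\<^sup>2)"
    using complex_norm_square[of "qinner X \<psi> u"] qinner_cnj[of X \<psi> u] by (simp add: mult.commute)
  obtain r' where cr: "c = complex_of_real r'" using c(1) by (auto elim: Reals_cases)
  show "qinner X u (mapply X (\<lambda>s t. c * outer \<psi> \<psi> s t) u) \<in> \<real>" by (subst e) (simp add: r cr)
  show "0 \<le> Re (qinner X u (mapply X (\<lambda>s t. c * outer \<psi> \<psi> s t) u))" using cr c(2) by (subst e) (simp add: r)
qed

lemma proj_trace_nonneg:
  assumes P: "projector X P" and s: "positive X \<sigma>"
  shows "qtrace X (mmult X P \<sigma>) \<in> \<real>" "0 \<le> Re (qtrace X (mmult X P \<sigma>))"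
proof -
  note PD = projectorD[OF P]
  have "qtrace X (mmult X P \<sigma>) = qtrace X (mmult X (mmult X P P) \<sigma>)" using PD by simp
  also have "\<dots> = qtrace X (mmult X (mmult X P \<sigma>) P)"
    by (simp add: mmult_assoc qtrace_mmult_comm[of X P])
  also have "\<dots> = qtrace X (mmult X (mmult X (adj P) \<sigma>) P)" using PD by simp
  finally have e: "qtrace X (mmult X P \<sigma>) = qtrace X (mmult X (mmult X (adj P) \<sigma>) P)" .
  show "qtrace X (mmult X P \<sigma>) \<in> \<real>" "0 \<le> Re (qtrace X (mmult X P \<sigma>))"
    unfolding e using trace_sandwich_nonneg[OF s] by auto
qed

lemma sandwich_positive:
  assumes s: "positive X \<sigma>" and C: "adj C = C"
  shows "positive X (mmult X (mmult X C \<sigma>) C)"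
  unfolding positive_def
proof (intro conjI allI impI)
  show "is_op X (mmult X (mmult X C \<sigma>) C)" by simp
  fix v assume v: "is_vec X v"
  have e: "qinner X v (mapply X (mmult X (mmult X C \<sigma>) C) v) = qinner X (mapply X C v) (mapply X \<sigma> (mapply X C v))"
    unfolding mapply_mmult by (subst qinner_mapply_adj) (simp add: C)
  show "qinner X v (mapply X (mmult X (mmult X C \<sigma>) C) v) \<in> \<real>"
    "0 \<le> Re (qinner X v (mapply X (mmult X (mmult X C \<sigma>) C) v))"
    unfolding e using positiveD(1,2)[OF s is_vec_mapply] by auto
qed

lemma projector_idop: "finite X \<Longrightarrow> projector X (idop X)"
  unfolding projector_def by (simp add: mmult_idop_left)

lemma trace_idop_left: "finite X \<Longrightarrow> is_op X \<sigma> \<Longrightarrow> qtrace X (mmult X (idop X) \<sigma>) = qtrace X \<sigma>"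
  by (simp add: mmult_idop_left)

lemma fix_mmult:
  assumes fin: "finite X" and B: "is_op X B" and H: "\<And>t. t \<subseteq> X \<Longrightarrow> mapply X A (colv X B t) = colv X B t"
  shows "mmult X A B = B"
proof (rule colv_eq_imp[OF is_op_mmult B])
  fix t assume t: "t \<subseteq> X"
  show "colv X (mmult X A B) t = colv X B t" using H[OF t] mapply_colv[OF t, of A B] by simp
qed

lemma colv_img: "projector X P \<Longrightarrow> t \<subseteq> X \<Longrightarrow> colv X P t \<in> img X P"
  using img_mapply[of X P "colv X P t"] mapply_colv[of t X P P] projectorD(2)[of X P] by simp

context
  fixes V Y :: "nat set" and E :: qsop
  assumes finY: "finite Y" and VY: "V \<subseteq> Y" and D: "DProg V E"
begin

definition adjE :: "qop \<Rightarrow> qop" where "adjE B = sadj Y (sext V Y E) B"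

lemma is_op_adjE: "is_op Y (adjE B)"
  unfolding adjE_def sadj_eq[OF finY D] by (rule is_op_adjw)

lemma L_sext_pos: "finite X \<Longrightarrow> Y \<subseteq> X \<Longrightarrow> positive X \<rho> \<Longrightarrow> positive X (sext V X E \<rho>)"
  using DProgD(4)[OF D] VY by blast

lemma L_lift: "finite X \<Longrightarrow> Y \<subseteq> X \<Longrightarrow>
   qtrace X (mmult X (ext Y X B) (sext V X E \<rho>)) = qtrace X (mmult X (ext Y X (adjE B)) \<rho>)"
  unfolding adjE_def by (rule lift_trace[OF _ _ VY D])

lemma L1:
  assumes R: "projector Y R" and X: "finite X" "Y \<subseteq> X" and \<rho>: "positive X \<rho>"
  shows "qtrace X (mmult X (ext Y X R) (sext V X E \<rho>)) \<in> \<real>"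
    "0 \<le> Re (qtrace X (mmult X (ext Y X R) (sext V X E \<rho>)))"
  using proj_trace_nonneg[OF projector_ext[OF X R] L_sext_pos[OF X \<rho>]] by auto

lemma L2:
  assumes R: "is_op Y R" and X: "finite X" "Y \<subseteq> X" and s: "is_op X \<sigma>"
  shows "qtrace X (mmult X (ext Y X (proj_compl Y R)) \<sigma>) = qtrace X \<sigma> - qtrace X (mmult X (ext Y X R) \<sigma>)"
  unfolding proj_compl_eq[OF R] ext_diff ext_idop[OF X(2)] mmult_diff_left qtrace_diff
    mmult_idop_left[OF X(1) s] ..

lemma L_trace_sext_le:
  assumes X: "finite X" "Y \<subseteq> X" and \<rho>: "positive X \<rho>"
  shows "Re (qtrace X (sext V X E \<rho>)) \<le> Re (qtrace X \<rho>)"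
  using sext_trace_le[OF X(1) D _ \<rho>] VY X by blast

lemma L3:
  assumes R: "projector Y R" and X: "finite X" "Y \<subseteq> X" and \<rho>: "positive X \<rho>"
  shows "Re (qtrace X (mmult X (ext Y X R) (sext V X E \<rho>))) \<le> Re (qtrace X \<rho>)"
proof -
  have "0 \<le> Re (qtrace X (mmult X (ext Y X (proj_compl Y R)) (sext V X E \<rho>)))"
    by (rule L1(2)[OF projector_compl[OF finY R] X \<rho>])
  hence "Re (qtrace X (mmult X (ext Y X R) (sext V X E \<rho>))) \<le> Re (qtrace X (sext V X E \<rho>))"
    unfolding L2[OF projectorD(1)[OF R] X is_op_sext] by simp
  also have "\<dots> \<le> Re (qtrace X \<rho>)" by (rule L_trace_sext_le[OF X \<rho>])
  finally show ?thesis .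
qed

lemma inner_as_trace:
  "is_vec Y v \<Longrightarrow> is_op Y A \<Longrightarrow> qinner Y v (mapply Y A v) = qtrace Y (mmult Y (ext Y Y A) (outer v v))"
  by (simp add: ext_self trace_outer)

lemma L4:
  assumes R: "projector Y R"
  shows "positive Y (adjE R)"
  unfolding positive_def
proof (intro conjI allI impI)
  show "is_op Y (adjE R)" by (rule is_op_adjE)
  fix v assume v: "is_vec Y v"
  have pv: "positive Y (outer v v)" using outer_positive[OF v, of 1] by simp
  have e: "qinner Y v (mapply Y (adjE R) v) = qtrace Y (mmult Y (ext Y Y R) (sext V Y E (outer v v)))"
    unfolding inner_as_trace[OF v is_op_adjE] L_lift[OF finY order_refl] ..
  show "qinner Y v (mapply Y (adjE R) v) \<in> \<real>" "0 \<le> Re (qinner Y v (mapply Y (adjE R) v))"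
    unfolding e using L1[OF R finY order_refl pv] by auto
qed

lemma L5:
  assumes R: "projector Y R"
  shows "positive Y (\<lambda>s t. idop Y s t - adjE R s t)"
  unfolding positive_def
proof (intro conjI allI impI)
  show "is_op Y (\<lambda>s t. idop Y s t - adjE R s t)" using is_op_adjE[of R] unfolding is_op_def idop_def by auto
  fix v assume v: "is_vec Y v"
  have pv: "positive Y (outer v v)" using outer_positive[OF v, of 1] by simp
  have e: "qinner Y v (mapply Y (adjE R) v) = qtrace Y (mmult Y (ext Y Y R) (sext V Y E (outer v v)))"
    unfolding inner_as_trace[OF v is_op_adjE] L_lift[OF finY order_refl] ..
  have e2: "qinner Y v (mapply Y (\<lambda>s t. idop Y s t - adjE R s t) v) = qinner Y v v - qinner Y v (mapply Y (adjE R) v)"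
    unfolding mapply_diff_op mapply_idop[OF finY v] qinner_diff_right ..
  have r1: "qinner Y v (mapply Y (adjE R) v) \<in> \<real>" using L4[OF R] v by (simp add: positiveD)
  have r2: "qinner Y v v \<in> \<real>" by (simp add: qinner_self_real)
  show "qinner Y v (mapply Y (\<lambda>s t. idop Y s t - adjE R s t) v) \<in> \<real>" unfolding e2 using r2 r1 by (rule Reals_diff)
  have "Re (qinner Y v (mapply Y (adjE R) v)) \<le> Re (qtrace Y (outer v v))"
    unfolding e by (rule L3[OF R finY order_refl pv])
  thus "0 \<le> Re (qinner Y v (mapply Y (\<lambda>s t. idop Y s t - adjE R s t) v))"
    unfolding e2 qtrace_outer[OF v] by simp
qed

end

lemma trace_cyc3: "qtrace X (mmult X (mmult X (mmult X A B) A) \<rho>) = qtrace X (mmult X B (mmult X (mmult X A \<rho>) A))"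
proof -
  have "qtrace X (mmult X (mmult X (mmult X A B) A) \<rho>) = qtrace X (mmult X A (mmult X B (mmult X A \<rho>)))"
    by (simp add: mmult_assoc)
  also have "\<dots> = qtrace X (mmult X (mmult X B (mmult X A \<rho>)) A)" by (rule qtrace_mmult_comm)
  also have "\<dots> = qtrace X (mmult X B (mmult X (mmult X A \<rho>) A))" by (simp add: mmult_assoc)
  finally show ?thesis .
qed

lemma adj_zero: "adj (\<lambda>s t. 0) = (\<lambda>s t. 0)" unfolding adj_def by simp

lemma compl_herm: "adj P = P \<Longrightarrow> adj (\<lambda>s t. idop X s t - P s t) = (\<lambda>s t. idop X s t - P s t)"
  using adj_idop[of X] unfolding adj_def by (intro ext) (metis complex_cnj_diff)

lemma is_op_diff: "is_op X A \<Longrightarrow> is_op X B \<Longrightarrow> is_op X (\<lambda>s t. A s t - B s t)"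
  unfolding is_op_def by auto

context
  fixes V Y :: "nat set" and E :: qsop
  assumes finY: "finite Y" and VY: "V \<subseteq> Y" and D: "DProg V E"
begin

abbreviation "aE \<equiv> adjE V Y E"

lemmas L1_p11 = L1[OF finY VY D] and L3_p11 = L3[OF finY VY D] and L4_p11 = L4[OF finY VY D]
  and L5_p11 = L5[OF finY VY D] and L_lift_p11 = L_lift[OF finY VY D] and is_op_adjE_p11 = is_op_adjE[OF finY VY D]
  and L2_p11 = L2[OF finY VY D]

lemma L7:
  assumes P: "projector Y P" and Q: "projector Y Q" and MP: "mmult Y (aE Q) P = P"
    and X: "finite X" "Y \<subseteq> X" and \<rho>: "positive X \<rho>"
  shows "Re (qtrace X (mmult X (ext Y X P) \<rho>)) \<le> Re (qtrace X (mmult X (ext Y X (aE Q)) \<rho>))"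
proof -
  let ?M = "aE Q"
  define P' where "P' = (\<lambda>s t. idop Y s t - P s t)"
  note PD = projectorD[OF P]
  have hM: "adj ?M = ?M" by (rule pos_herm[OF finY L4_p11[OF Q]])
  have PM: "mmult Y P ?M = P"
  proof -
    have "adj (mmult Y ?M P) = adj P" using MP by simp
    thus ?thesis unfolding adj_mmult hM PD(3) .
  qed
  have opM: "is_op Y ?M" by (rule is_op_adjE_p11)
  have hP': "adj P' = P'" unfolding P'_def by (rule compl_herm[OF PD(3)])
  have opP': "is_op Y P'" unfolding P'_def by (rule is_op_diff[OF is_op_idop PD(1)])
  have K: "mmult Y (mmult Y P' ?M) P' = (\<lambda>s t. ?M s t - P s t)"
    unfolding P'_def mmult_diff_left mmult_diff_right mmult_idop_left[OF finY opM] PM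
      mmult_idop_right[OF finY opM] mmult_idop_right[OF finY PD(1)] MP PD(2) by simp
  define \<rho>'' where "\<rho>'' = mmult X (mmult X (ext Y X P') \<rho>) (ext Y X P')"
  have pos: "positive X \<rho>''" unfolding \<rho>''_def
    by (rule sandwich_positive[OF \<rho>]) (simp add: adj_ext hP')
  have "qtrace X (mmult X (ext Y X ?M) \<rho>) - qtrace X (mmult X (ext Y X P) \<rho>)
      = qtrace X (mmult X (ext Y X (mmult Y (mmult Y P' ?M) P')) \<rho>)"
    unfolding K ext_diff mmult_diff_left qtrace_diff ..
  also have "\<dots> = qtrace X (mmult X (ext Y X ?M) \<rho>'')"
    unfolding ext_mmult[OF X] \<rho>''_def by (rule trace_cyc3)
  also have "\<dots> = qtrace X (mmult X (ext Y X Q) (sext V X E \<rho>''))"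
    by (rule L_lift_p11[OF X, symmetric])
  finally have e: "qtrace X (mmult X (ext Y X ?M) \<rho>) - qtrace X (mmult X (ext Y X P) \<rho>)
      = qtrace X (mmult X (ext Y X Q) (sext V X E \<rho>''))" .
  have "0 \<le> Re (qtrace X (mmult X (ext Y X Q) (sext V X E \<rho>'')))" by (rule L1_p11(2)[OF Q X pos])
  thus ?thesis unfolding e[symmetric] by simp
qed

lemma L6:
  assumes P: "projector Y P" and R: "projector Y R" and NP: "mmult Y (aE R) P = (\<lambda>s t. 0)"
    and X: "finite X" "Y \<subseteq> X" and \<rho>: "positive X \<rho>"
  shows "Re (qtrace X (mmult X (ext Y X P) \<rho>)) + Re (qtrace X (mmult X (ext Y X (aE R)) \<rho>)) \<le> Re (qtrace X \<rho>)"
proof -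
  let ?N = "aE R"
  define P' where "P' = (\<lambda>s t. idop Y s t - P s t)"
  note PD = projectorD[OF P]
  have hN: "adj ?N = ?N" by (rule pos_herm[OF finY L4_p11[OF R]])
  have PN: "mmult Y P ?N = (\<lambda>s t. 0)"
  proof -
    have "adj (mmult Y ?N P) = adj (\<lambda>s t. 0)" using NP by simp
    thus ?thesis unfolding adj_mmult hN PD(3) adj_zero .
  qed
  have opN: "is_op Y ?N" by (rule is_op_adjE_p11)
  have hP': "adj P' = P'" unfolding P'_def by (rule compl_herm[OF PD(3)])
  have opP': "is_op Y P'" unfolding P'_def by (rule is_op_diff[OF is_op_idop PD(1)])
  have P'P': "mmult Y P' P' = P'"
    using projectorD(2)[OF projector_compl[OF finY P]] unfolding proj_compl_eq[OF PD(1)] P'_def .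
  have K1: "mmult Y P' (\<lambda>s t. idop Y s t - ?N s t) = (\<lambda>s t. P' s t - ?N s t)"
    unfolding mmult_diff_right mmult_idop_right[OF finY opP'] unfolding P'_def mmult_diff_left
      mmult_idop_left[OF finY opN] PN by simp
  have K: "mmult Y (mmult Y P' (\<lambda>s t. idop Y s t - ?N s t)) P' = (\<lambda>s t. P' s t - ?N s t)"
    unfolding K1 mmult_diff_left P'P' unfolding P'_def mmult_diff_right mmult_idop_right[OF finY opN] NP
    by simp
  define \<rho>'' where "\<rho>'' = mmult X (mmult X (ext Y X P') \<rho>) (ext Y X P')"
  have pos: "positive X \<rho>''" unfolding \<rho>''_def
    by (rule sandwich_positive[OF \<rho>]) (simp add: adj_ext hP')
  have op\<rho>: "is_op X \<rho>" by (rule positiveD(3)[OF \<rho>])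
  have "qtrace X \<rho> - qtrace X (mmult X (ext Y X P) \<rho>) - qtrace X (mmult X (ext Y X ?N) \<rho>)
      = qtrace X (mmult X (ext Y X (\<lambda>s t. P' s t - ?N s t)) \<rho>)"
    unfolding P'_def ext_diff mmult_diff_left qtrace_diff ext_idop[OF X(2)] mmult_idop_left[OF X(1) op\<rho>] ..
  also have "\<dots> = qtrace X (mmult X (ext Y X (mmult Y (mmult Y P' (\<lambda>s t. idop Y s t - ?N s t)) P')) \<rho>)"
    unfolding K ..
  also have "\<dots> = qtrace X (mmult X (ext Y X (\<lambda>s t. idop Y s t - ?N s t)) \<rho>'')"
    unfolding ext_mmult[OF X] \<rho>''_def by (rule trace_cyc3)
  also have "\<dots> = qtrace X \<rho>'' - qtrace X (mmult X (ext Y X ?N) \<rho>'')"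
    unfolding ext_diff mmult_diff_left qtrace_diff ext_idop[OF X(2)] mmult_idop_left[OF X(1) positiveD(3)[OF pos]] ..
  also have "\<dots> = qtrace X \<rho>'' - qtrace X (mmult X (ext Y X R) (sext V X E \<rho>''))"
    unfolding L_lift_p11[OF X] ..
  finally have e: "qtrace X \<rho> - qtrace X (mmult X (ext Y X P) \<rho>) - qtrace X (mmult X (ext Y X ?N) \<rho>)
      = qtrace X \<rho>'' - qtrace X (mmult X (ext Y X R) (sext V X E \<rho>''))" .
  have "Re (qtrace X (mmult X (ext Y X R) (sext V X E \<rho>''))) \<le> Re (qtrace X \<rho>'')" by (rule L3_p11[OF R X pos])
  hence "0 \<le> Re (qtrace X \<rho> - qtrace X (mmult X (ext Y X P) \<rho>) - qtrace X (mmult X (ext Y X ?N) \<rho>))"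
    unfolding e by simp
  thus ?thesis by simp
qed

end

lemma scale_positive:
  assumes A: "positive X A" and c: "c \<in> \<real>" "0 \<le> Re c"
  shows "positive X (\<lambda>s t. c * A s t)"
  unfolding positive_def
proof (intro conjI allI impI)
  show "is_op X (\<lambda>s t. c * A s t)" using positiveD(3)[OF A] unfolding is_op_def by auto
  fix v assume v: "is_vec X v"
  obtain r where cr: "c = complex_of_real r" using c(1) by (auto elim: Reals_cases)
  have e: "qinner X v (mapply X (\<lambda>s t. c * A s t) v) = c * qinner X v (mapply X A v)"
    unfolding mapply_scale_op qinner_scale_right ..
  show "qinner X v (mapply X (\<lambda>s t. c * A s t) v) \<in> \<real>"
    unfolding e using c(1) positiveD(1)[OF A v] by (rule Reals_mult)
  obtain z where z: "qinner X v (mapply X A v) = complex_of_real z" using positiveD(1)[OF A v] by (auto elim: Reals_cases)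
  have z0: "0 \<le> z" using positiveD(2)[OF A v] z by simp
  have r0: "0 \<le> r" using c(2) cr by simp
  have "Re (qinner X v (mapply X (\<lambda>s t. c * A s t) v)) = r * z" using e z cr by simp
  thus "0 \<le> Re (qinner X v (mapply X (\<lambda>s t. c * A s t) v))" using z0 r0 by simp
qed

definition rk1 :: "nat set \<Rightarrow> qvec \<Rightarrow> qop" where
  "rk1 X \<psi> = (\<lambda>s t. complex_of_real (1 / (1 + Re (qinner X \<psi> \<psi>))) * outer \<psi> \<psi> s t)"

lemma rk1_pdo:
  assumes v: "is_vec X \<psi>" shows "pdo X (rk1 X \<psi>)"
proof -
  let ?n = "Re (qinner X \<psi> \<psi>)"
  have n0: "0 \<le> ?n" by (rule qinner_self_nonneg)
  have pos: "positive X (rk1 X \<psi>)" unfolding rk1_def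
    by (rule outer_positive[OF v]) (use n0 in auto)
  have "qtrace X (rk1 X \<psi>) = complex_of_real (1 / (1 + ?n)) * qinner X \<psi> \<psi>"
    unfolding rk1_def qtrace_scale qtrace_outer[OF v] ..
  hence "Re (qtrace X (rk1 X \<psi>)) = ?n / (1 + ?n)" by simp
  also have "\<dots> \<le> 1" using n0 by simp
  finally show ?thesis unfolding pdo_def using pos by simp
qed

lemma rk1_trace:
  assumes v: "is_vec X \<psi>" and A: "is_op X A"
  shows "qtrace X (mmult X (ext X X A) (rk1 X \<psi>)) = complex_of_real (1 / (1 + Re (qinner X \<psi> \<psi>))) * qinner X \<psi> (mapply X A \<psi>)"
  unfolding rk1_def mmult_scale_right qtrace_scale ext_self[OF A] trace_outer[OF v] ..

lemma rk1_coef_pos: "0 < 1 / (1 + Re (qinner X \<psi> \<psi>))"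
  using qinner_self_nonneg[of X \<psi>] by simp

lemma real_zero_of_Re: "z \<in> \<real> \<Longrightarrow> Re z = 0 \<Longrightarrow> z = 0"
  by (auto elim: Reals_cases)

lemma kill_mmult:
  assumes H: "\<And>t. t \<subseteq> X \<Longrightarrow> mapply X A (colv X B t) = (\<lambda>s. 0)"
  shows "mmult X A B = (\<lambda>s t. 0)"
proof (rule colv_eq_imp[OF is_op_mmult])
  show "is_op X (\<lambda>s t. 0::complex)" unfolding is_op_def by simp
  fix t assume t: "t \<subseteq> X"
  have "colv X (mmult X A B) t = (\<lambda>s. 0)" using H[OF t] mapply_colv[OF t, of A B] by simp
  moreover have "colv X (\<lambda>s t. 0) t = (\<lambda>s. 0)" unfolding colv_def by auto
  ultimately show "colv X (mmult X A B) t = colv X (\<lambda>s t. 0) t" by simp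
qed

lemma Nnull_eq:
  assumes fin: "finite X" and N: "positive X N"
  shows "Nnull X N = {\<psi>. is_vec X \<psi> \<and> mapply X N \<psi> = (\<lambda>s. 0)}"
proof
  show "Nnull X N \<subseteq> {\<psi>. is_vec X \<psi> \<and> mapply X N \<psi> = (\<lambda>s. 0)}"
    unfolding Nnull_def using pos_null[OF fin N] by blast
  have z: "qinner X \<psi> (\<lambda>s. 0) = 0" for \<psi> unfolding qinner_def by simp
  show "{\<psi>. is_vec X \<psi> \<and> mapply X N \<psi> = (\<lambda>s. 0)} \<subseteq> Nnull X N"
    unfolding Nnull_def using z by auto
qed

lemma kernel_subsp: "subsp X {\<psi>. is_vec X \<psi> \<and> mapply X N \<psi> = (\<lambda>s. 0)}"
  unfolding subsp_def
proof (intro conjI allI impI ballI)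
  show "(\<lambda>s. 0) \<in> {\<psi>. is_vec X \<psi> \<and> mapply X N \<psi> = (\<lambda>s. 0)}"
    using mapply_scale_vec[of X N 0 "\<lambda>s. 0"] by (simp add: is_vec_def)
  fix a u v assume u: "u \<in> {\<psi>. is_vec X \<psi> \<and> mapply X N \<psi> = (\<lambda>s. 0)}" and v: "v \<in> {\<psi>. is_vec X \<psi> \<and> mapply X N \<psi> = (\<lambda>s. 0)}"
  show "(\<lambda>s. u s + a * v s) \<in> {\<psi>. is_vec X \<psi> \<and> mapply X N \<psi> = (\<lambda>s. 0)}"
    using u v by (simp add: mapply_add_vec mapply_scale_vec is_vec_def)
qed auto

definition rng :: "nat set \<Rightarrow> qop \<Rightarrow> qvec set" where
  "rng X A = {w. \<exists>v. is_vec X v \<and> w = mapply X A v}"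

lemma rng_subsp: "subsp X (rng X A)"
  unfolding subsp_def rng_def
proof (intro conjI allI impI ballI)
  show "(\<lambda>s. 0) \<in> {w. \<exists>v. is_vec X v \<and> w = mapply X A v}"
    using mapply_scale_vec[of X A 0 "\<lambda>s. 0"] by (auto simp: is_vec_def)
  fix a u v assume u: "u \<in> {w. \<exists>v. is_vec X v \<and> w = mapply X A v}" and v: "v \<in> {w. \<exists>v. is_vec X v \<and> w = mapply X A v}"
  then obtain u' v' where u': "is_vec X u'" "u = mapply X A u'" and v': "is_vec X v'" "v = mapply X A v'" by auto
  have "(\<lambda>s. u s + a * v s) = mapply X A (\<lambda>s. u' s + a * v' s)"
    unfolding u' v' mapply_add_vec mapply_scale_vec ..
  moreover have "is_vec X (\<lambda>s. u' s + a * v' s)" using u'(1) v'(1) by (rule is_vec_lin)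
  ultimately show "(\<lambda>s. u s + a * v s) \<in> {w. \<exists>v. is_vec X v \<and> w = mapply X A v}" by blast
qed (auto simp: rng_def)

context
  fixes V Y :: "nat set" and E :: qsop
  assumes finY: "finite Y" and VY: "V \<subseteq> Y" and D: "DProg V E"
begin

lemmas L1_p12 = L1[OF finY VY D] and L3_p12 = L3[OF finY VY D] and L4_p12 = L4[OF finY VY D]
  and L5_p12 = L5[OF finY VY D] and L_lift_p12 = L_lift[OF finY VY D] and is_op_adjE_p12 = is_op_adjE[OF finY VY D]
  and L2_p12 = L2[OF finY VY D] and L6_p12 = L6[OF finY VY D] and L7_p12 = L7[OF finY VY D]

lemma tot_iff:
  assumes P: "projector Y P" and Q: "projector Y Q"
  shows "tot V Y E P Q \<longleftrightarrow> img Y P \<subseteq> img Y (aE V Y E Q)"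
proof
  let ?M = "aE V Y E Q"
  assume H: "img Y P \<subseteq> img Y ?M"
  have MP: "mmult Y ?M P = P"
  proof (rule fix_mmult[OF finY projectorD(1)[OF P]])
    fix t assume "t \<subseteq> Y"
    hence "colv Y P t \<in> img Y ?M" using colv_img[OF P] H by blast
    thus "mapply Y ?M (colv Y P t) = colv Y P t" unfolding img_def by simp
  qed
  show "tot V Y E P Q" unfolding tot_def
  proof (intro allI impI)
    fix X \<rho> assume X: "finite X" "Y \<subseteq> X" and "pdo X \<rho>"
    hence \<rho>: "positive X \<rho>" unfolding pdo_def by simp
    show "Re (qtrace X (mmult X (ext Y X P) \<rho>)) \<le> Re (qtrace X (mmult X (ext Y X Q) (sext V X E \<rho>)))"
      unfolding L_lift_p12[OF X] by (rule L7_p12[OF P Q MP X \<rho>])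
  qed
next
  let ?M = "aE V Y E Q"
  assume T: "tot V Y E P Q"
  show "img Y P \<subseteq> img Y ?M"
  proof
    fix \<psi> assume "\<psi> \<in> img Y P"
    hence v: "is_vec Y \<psi>" and Pv: "mapply Y P \<psi> = \<psi>" unfolding img_def by auto
    let ?c = "1 / (1 + Re (qinner Y \<psi> \<psi>))"
    have "Re (qtrace Y (mmult Y (ext Y Y P) (rk1 Y \<psi>))) \<le> Re (qtrace Y (mmult Y (ext Y Y Q) (sext V Y E (rk1 Y \<psi>))))"
      using T rk1_pdo[OF v] finY unfolding tot_def by blast
    also have "\<dots> = Re (qtrace Y (mmult Y (ext Y Y ?M) (rk1 Y \<psi>)))" unfolding L_lift_p12[OF finY order_refl] ..
    finally have "?c * Re (qinner Y \<psi> \<psi>) \<le> ?c * Re (qinner Y \<psi> (mapply Y ?M \<psi>))"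
      unfolding rk1_trace[OF v projectorD(1)[OF P]] rk1_trace[OF v is_op_adjE_p12] Pv by simp
    hence le: "Re (qinner Y \<psi> \<psi>) \<le> Re (qinner Y \<psi> (mapply Y ?M \<psi>))"
      using rk1_coef_pos[of Y \<psi>] by (simp only: mult_le_cancel_left_pos)
    have pos: "positive Y (\<lambda>s t. idop Y s t - ?M s t)" by (rule L5_p12[OF Q])
    have e2: "qinner Y \<psi> (mapply Y (\<lambda>s t. idop Y s t - ?M s t) \<psi>) = qinner Y \<psi> \<psi> - qinner Y \<psi> (mapply Y ?M \<psi>)"
      unfolding mapply_diff_op mapply_idop[OF finY v] qinner_diff_right ..
    have "qinner Y \<psi> (mapply Y (\<lambda>s t. idop Y s t - ?M s t) \<psi>) = 0"
      using positiveD(1,2)[OF pos v] le unfolding e2 by (intro real_zero_of_Re) auto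
    hence "mapply Y (\<lambda>s t. idop Y s t - ?M s t) \<psi> = (\<lambda>s. 0)" by (rule pos_null[OF finY pos v])
    hence "mapply Y ?M \<psi> = \<psi>" unfolding mapply_diff_op mapply_idop[OF finY v]
      by (metis (no_types, lifting) eq_iff_diff_eq_0 ext)
    thus "\<psi> \<in> img Y ?M" using v unfolding img_def by simp
  qed
qed

lemma par_rw:
  assumes Q: "projector Y Q" and X: "finite X" "Y \<subseteq> X" and op: "is_op X \<rho>"
  shows "Re (qtrace X (mmult X (ext Y X Q) (sext V X E \<rho>))) + Re (qtrace X \<rho>) - Re (qtrace X (sext V X E \<rho>))
    = Re (qtrace X \<rho>) - Re (qtrace X (mmult X (ext Y X (aE V Y E (proj_compl Y Q))) \<rho>))"
proof -
  have "qtrace X (mmult X (ext Y X (aE V Y E (proj_compl Y Q))) \<rho>) = qtrace X (sext V X E \<rho>) - qtrace X (mmult X (ext Y X Q) (sext V X E \<rho>))"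
    unfolding L_lift_p12[OF X, symmetric] by (rule L2_p12[OF projectorD(1)[OF Q] X is_op_sext])
  thus ?thesis by simp
qed

lemma par_iff1:
  assumes P: "projector Y P" and Q: "projector Y Q"
  shows "par V Y E P Q \<longleftrightarrow> img Y P \<subseteq> Nnull Y (aE V Y E (proj_compl Y Q))"
proof -
  let ?N = "aE V Y E (proj_compl Y Q)"
  have Q': "projector Y (proj_compl Y Q)" by (rule projector_compl[OF finY Q])
  have Npos: "positive Y ?N" by (rule L4_p12[OF Q'])
  show ?thesis
  proof
    assume H: "img Y P \<subseteq> Nnull Y ?N"
    have NP: "mmult Y ?N P = (\<lambda>s t. 0)"
    proof (rule kill_mmult)
      fix t assume "t \<subseteq> Y"
      hence "colv Y P t \<in> Nnull Y ?N" using colv_img[OF P] H by blast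
      thus "mapply Y ?N (colv Y P t) = (\<lambda>s. 0)" unfolding Nnull_eq[OF finY Npos] by simp
    qed
    show "par V Y E P Q" unfolding par_def
    proof (intro allI impI)
      fix X \<rho> assume X: "finite X" "Y \<subseteq> X" and "pdo X \<rho>"
      hence \<rho>: "positive X \<rho>" unfolding pdo_def by simp
      show "Re (qtrace X (mmult X (ext Y X P) \<rho>)) \<le> Re (qtrace X (mmult X (ext Y X Q) (sext V X E \<rho>))) + Re (qtrace X \<rho>) - Re (qtrace X (sext V X E \<rho>))"
        unfolding par_rw[OF Q X positiveD(3)[OF \<rho>]] using L6_p12[OF P Q' NP X \<rho>] by simp
    qed
  next
    assume T: "par V Y E P Q"
    show "img Y P \<subseteq> Nnull Y ?N"
    proof
      fix \<psi> assume "\<psi> \<in> img Y P"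
      hence v: "is_vec Y \<psi>" and Pv: "mapply Y P \<psi> = \<psi>" unfolding img_def by auto
      let ?c = "1 / (1 + Re (qinner Y \<psi> \<psi>))"
      have pd: "pdo Y (rk1 Y \<psi>)" by (rule rk1_pdo[OF v])
      have op: "is_op Y (rk1 Y \<psi>)" using pd unfolding pdo_def positive_def by simp
      have "Re (qtrace Y (mmult Y (ext Y Y P) (rk1 Y \<psi>))) \<le> Re (qtrace Y (mmult Y (ext Y Y Q) (sext V Y E (rk1 Y \<psi>)))) + Re (qtrace Y (rk1 Y \<psi>)) - Re (qtrace Y (sext V Y E (rk1 Y \<psi>)))"
        using T pd finY unfolding par_def by blast
      hence "Re (qtrace Y (mmult Y (ext Y Y P) (rk1 Y \<psi>))) \<le> Re (qtrace Y (rk1 Y \<psi>)) - Re (qtrace Y (mmult Y (ext Y Y ?N) (rk1 Y \<psi>)))"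
        unfolding par_rw[OF Q finY order_refl op] .
      moreover have "qtrace Y (rk1 Y \<psi>) = complex_of_real ?c * qinner Y \<psi> \<psi>"
        unfolding rk1_def qtrace_scale qtrace_outer[OF v] ..
      ultimately have "?c * Re (qinner Y \<psi> \<psi>) \<le> ?c * Re (qinner Y \<psi> \<psi>) - ?c * Re (qinner Y \<psi> (mapply Y ?N \<psi>))"
        unfolding rk1_trace[OF v projectorD(1)[OF P]] rk1_trace[OF v is_op_adjE_p12] Pv by simp
      hence "?c * Re (qinner Y \<psi> (mapply Y ?N \<psi>)) \<le> 0" by simp
      hence "Re (qinner Y \<psi> (mapply Y ?N \<psi>)) \<le> 0"
        using rk1_coef_pos[of Y \<psi>] by (metis mult_le_0_iff not_less)
      hence "qinner Y \<psi> (mapply Y ?N \<psi>) = 0"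
        using positiveD(1,2)[OF Npos v] by (intro real_zero_of_Re) auto
      thus "\<psi> \<in> Nnull Y ?N" using v unfolding Nnull_def by simp
    qed
  qed
qed

end

lemma proj_trace_sandwich:
  assumes P: "projector X P"
  shows "qtrace X (mmult X P \<sigma>) = qtrace X (mmult X (mmult X (adj P) \<sigma>) P)"
proof -
  note PD = projectorD[OF P]
  have "qtrace X (mmult X P \<sigma>) = qtrace X (mmult X (mmult X P P) \<sigma>)" using PD by simp
  also have "\<dots> = qtrace X (mmult X (mmult X P \<sigma>) P)"
    by (simp add: mmult_assoc qtrace_mmult_comm[of X P])
  also have "\<dots> = qtrace X (mmult X (mmult X (adj P) \<sigma>) P)" using PD by simp
  finally show ?thesis .
qed

context
  fixes V Y :: "nat set" and E :: qsop
  assumes finY: "finite Y" and VY: "V \<subseteq> Y" and D: "DProg V E"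
begin

lemmas L1_p13 = L1[OF finY VY D] and L3_p13 = L3[OF finY VY D] and L4_p13 = L4[OF finY VY D]
  and L5_p13 = L5[OF finY VY D] and L_lift_p13 = L_lift[OF finY VY D] and is_op_adjE_p13 = is_op_adjE[OF finY VY D]
  and L2_p13 = L2[OF finY VY D] and L6_p13 = L6[OF finY VY D] and L7_p13 = L7[OF finY VY D]
  and par_rw_p13 = par_rw[OF finY VY D]

lemma par_iff2:
  assumes Q: "projector Y Q" and R: "projector Y R"
  shows "par V Y E Q R \<longleftrightarrow> rng Y (sext V Y E Q) \<subseteq> img Y R"
proof -
  let ?A = "sext V Y E Q"
  let ?R' = "proj_compl Y R"
  let ?N = "aE V Y E ?R'"
  note QD = projectorD[OF Q] and RD = projectorD[OF R]
  have R': "projector Y ?R'" by (rule projector_compl[OF finY R])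
  note R'D = projectorD[OF R']
  have Apos: "positive Y ?A" by (rule DProgD(4)[OF D finY VY projector_positive[OF Q]])
  have Npos: "positive Y ?N" by (rule L4_p13[OF R'])
  have key: "qtrace Y (mmult Y ?N Q) = qtrace Y (mmult Y ?R' ?A)"
  proof -
    have "qtrace Y (mmult Y ?R' ?A) = qtrace Y (mmult Y (ext Y Y ?R') (sext V Y E Q))"
      using ext_self[OF R'D(1)] by simp
    also have "\<dots> = qtrace Y (mmult Y (ext Y Y ?N) Q)" by (rule L_lift_p13[OF finY order_refl])
    also have "\<dots> = qtrace Y (mmult Y ?N Q)" using ext_self[OF is_op_adjE_p13] by simp
    finally show ?thesis ..
  qed
  have R'v: "mapply Y ?R' w = (\<lambda>s. w s - mapply Y R w s)" if "is_vec Y w" for w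
    unfolding proj_compl_eq[OF RD(1)] mapply_diff_op mapply_idop[OF finY that] ..
  show ?thesis
  proof
    assume T: "par V Y E Q R"
    define c where "c = 1 / (1 + Re (qtrace Y Q))"
    have trQ: "qtrace Y Q \<in> \<real>" "0 \<le> Re (qtrace Y Q)"
      using proj_trace_nonneg[OF Q projector_positive[OF projector_idop[OF finY]]]
      unfolding mmult_idop_right[OF finY QD(1)] by auto
    have c0: "0 < c" unfolding c_def using trQ by simp
    define \<rho> where "\<rho> = (\<lambda>s t. complex_of_real c * Q s t)"
    have \<rho>pos: "positive Y \<rho>" unfolding \<rho>_def
      by (rule scale_positive[OF projector_positive[OF Q]]) (use c0 in auto)
    have tr\<rho>: "qtrace Y \<rho> = complex_of_real c * qtrace Y Q" unfolding \<rho>_def qtrace_scale ..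
    have "Re (qtrace Y \<rho>) = c * Re (qtrace Y Q)" unfolding tr\<rho> by simp
    also have "\<dots> \<le> 1" unfolding c_def using trQ by simp
    finally have pd: "pdo Y \<rho>" unfolding pdo_def using \<rho>pos by simp
    have "Re (qtrace Y (mmult Y (ext Y Y Q) \<rho>)) \<le> Re (qtrace Y (mmult Y (ext Y Y R) (sext V Y E \<rho>))) + Re (qtrace Y \<rho>) - Re (qtrace Y (sext V Y E \<rho>))"
      using T pd finY unfolding par_def by blast
    hence "Re (qtrace Y (mmult Y (ext Y Y Q) \<rho>)) \<le> Re (qtrace Y \<rho>) - Re (qtrace Y (mmult Y (ext Y Y ?N) \<rho>))"
      unfolding par_rw_p13[OF R finY order_refl positiveD(3)[OF \<rho>pos]] .
    moreover have "qtrace Y (mmult Y (ext Y Y Q) \<rho>) = complex_of_real c * qtrace Y Q"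
      unfolding ext_self[OF QD(1)] \<rho>_def mmult_scale_right qtrace_scale QD(2) ..
    moreover have "qtrace Y (mmult Y (ext Y Y ?N) \<rho>) = complex_of_real c * qtrace Y (mmult Y ?R' ?A)"
      unfolding ext_self[OF is_op_adjE_p13] \<rho>_def mmult_scale_right qtrace_scale key ..
    ultimately have "c * Re (qtrace Y (mmult Y ?R' ?A)) \<le> 0" unfolding tr\<rho> by simp
    hence le: "Re (qtrace Y (mmult Y ?R' ?A)) \<le> 0" using c0 by (metis mult_le_0_iff not_less)
    have "0 \<le> Re (qtrace Y (mmult Y ?R' ?A))" by (rule proj_trace_nonneg(2)[OF R' Apos])
    hence "Re (qtrace Y (mmult Y (mmult Y (adj ?R') ?A) ?R')) = 0" using le
      unfolding proj_trace_sandwich[OF R'] by simp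
    hence AR: "mmult Y ?A ?R' = (\<lambda>s t. 0)" by (rule trace_sandwich_zero[OF finY Apos])
    have RA: "mmult Y ?R' ?A = (\<lambda>s t. 0)"
    proof -
      have "adj (mmult Y ?A ?R') = adj (\<lambda>s t. 0)" using AR by simp
      thus ?thesis unfolding adj_mmult R'D(3) pos_herm[OF finY Apos] adj_zero .
    qed
    show "rng Y ?A \<subseteq> img Y R"
    proof
      fix w assume "w \<in> rng Y ?A"
      then obtain v where v: "is_vec Y v" and w: "w = mapply Y ?A v" unfolding rng_def by auto
      have "mapply Y ?R' w = mapply Y (mmult Y ?R' ?A) v" unfolding w mapply_mmult ..
      also have "\<dots> = (\<lambda>s. 0)" unfolding RA by (auto simp: mapply_def)
      finally have "mapply Y ?R' w = (\<lambda>s. 0)" .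
      hence "mapply Y R w = w" unfolding R'v[OF is_vec_mapply[of Y ?A v, folded w]]
        by (metis (no_types, lifting) eq_iff_diff_eq_0 ext)
      thus "w \<in> img Y R" unfolding img_def w by simp
    qed
  next
    assume H: "rng Y ?A \<subseteq> img Y R"
    have RA: "mmult Y ?R' ?A = (\<lambda>s t. 0)"
    proof (rule kill_mmult)
      fix t assume t: "t \<subseteq> Y"
      have "colv Y ?A t = mapply Y ?A (unitv t)" unfolding mapply_unitv[OF finY t] colv_def ..
      hence "colv Y ?A t \<in> rng Y ?A" unfolding rng_def using is_vec_unitv[OF t] by blast
      hence "mapply Y R (colv Y ?A t) = colv Y ?A t" using H unfolding img_def by blast
      thus "mapply Y ?R' (colv Y ?A t) = (\<lambda>s. 0)" unfolding R'v[OF is_vec_colv] by simp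
    qed
    have "Re (qtrace Y (mmult Y (mmult Y (adj Q) ?N) Q)) = 0"
      unfolding proj_trace_sandwich[OF Q, symmetric] qtrace_mmult_comm[of Y Q] key RA
      by (simp add: qtrace_def)
    hence NQ: "mmult Y ?N Q = (\<lambda>s t. 0)" by (rule trace_sandwich_zero[OF finY Npos])
    show "par V Y E Q R" unfolding par_def
    proof (intro allI impI)
      fix X \<rho> assume X: "finite X" "Y \<subseteq> X" and "pdo X \<rho>"
      hence \<rho>: "positive X \<rho>" unfolding pdo_def by simp
      show "Re (qtrace X (mmult X (ext Y X Q) \<rho>)) \<le> Re (qtrace X (mmult X (ext Y X R) (sext V X E \<rho>))) + Re (qtrace X \<rho>) - Re (qtrace X (sext V X E \<rho>))"
        unfolding par_rw_p13[OF R X positiveD(3)[OF \<rho>]] using L6_p13[OF Q R' NQ X \<rho>] by simp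
    qed
  qed
qed

end

context
  fixes V Y :: "nat set" and E :: qsop
  assumes finY: "finite Y" and VY: "V \<subseteq> Y" and D: "DProg V E"
begin

lemmas tot_iff_p14 = tot_iff[OF finY VY D] and par_iff1_p14 = par_iff1[OF finY VY D]
  and par_iff2_p14 = par_iff2[OF finY VY D] and L4_p14 = L4[OF finY VY D]

lemma wpp_img:
  assumes Q: "projector Y Q"
  shows "img Y (wpp V Y E Q) = img Y (aE V Y E Q)"
proof -
  obtain P0 where P0: "projector Y P0" and I0: "img Y P0 = img Y (aE V Y E Q)"
    using proj_exists[OF finY img_subsp_any] by blast
  have "wpp V Y E Q = P0" unfolding wpp_def
  proof (rule the_equality)
    show "projector Y P0 \<and> tot V Y E P0 Q \<and> (\<forall>P'. projector Y P' \<and> tot V Y E P' Q \<longrightarrow> proj_le Y P' P0)"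
      using P0 I0 tot_iff_p14[OF _ Q] unfolding proj_le_def by auto
  next
    fix P assume H: "projector Y P \<and> tot V Y E P Q \<and> (\<forall>P'. projector Y P' \<and> tot V Y E P' Q \<longrightarrow> proj_le Y P' P)"
    have "img Y P \<subseteq> img Y P0" using H I0 tot_iff_p14[OF _ Q] by auto
    moreover have "img Y P0 \<subseteq> img Y P" using H P0 I0 tot_iff_p14[OF P0 Q] unfolding proj_le_def by auto
    ultimately show "P = P0" using proj_eq_of_img[of Y P P0] H P0 by auto
  qed
  thus ?thesis using I0 by simp
qed

lemma wlpp_img:
  assumes Q: "projector Y Q"
  shows "img Y (wlpp V Y E Q) = Nnull Y (aE V Y E (proj_compl Y Q))"
proof -
  let ?N = "aE V Y E (proj_compl Y Q)"
  have Npos: "positive Y ?N" by (rule L4_p14[OF projector_compl[OF finY Q]])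
  obtain P0 where P0: "projector Y P0" and I0: "img Y P0 = Nnull Y ?N"
    using proj_exists[OF finY kernel_subsp] Nnull_eq[OF finY Npos] by metis
  have "wlpp V Y E Q = P0" unfolding wlpp_def
  proof (rule the_equality)
    show "projector Y P0 \<and> par V Y E P0 Q \<and> (\<forall>P'. projector Y P' \<and> par V Y E P' Q \<longrightarrow> proj_le Y P' P0)"
      using P0 I0 par_iff1_p14[OF _ Q] unfolding proj_le_def by auto
  next
    fix P assume H: "projector Y P \<and> par V Y E P Q \<and> (\<forall>P'. projector Y P' \<and> par V Y E P' Q \<longrightarrow> proj_le Y P' P)"
    have "img Y P \<subseteq> img Y P0" using H I0 par_iff1_p14[OF _ Q] by auto
    moreover have "img Y P0 \<subseteq> img Y P" using H P0 I0 par_iff1_p14[OF P0 Q] unfolding proj_le_def by auto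
    ultimately show "P = P0" using proj_eq_of_img[of Y P P0] H P0 by auto
  qed
  thus ?thesis using I0 by simp
qed

lemma spp_img:
  assumes Q: "projector Y Q"
  shows "img Y (spp V Y E Q) = rng Y (sext V Y E Q)"
proof -
  obtain R0 where R0: "projector Y R0" and I0: "img Y R0 = rng Y (sext V Y E Q)"
    using proj_exists[OF finY rng_subsp] by blast
  have "spp V Y E Q = R0" unfolding spp_def
  proof (rule the_equality)
    show "projector Y R0 \<and> par V Y E Q R0 \<and> (\<forall>R'. projector Y R' \<and> par V Y E Q R' \<longrightarrow> proj_le Y R0 R')"
      using R0 I0 par_iff2_p14[OF Q] unfolding proj_le_def by auto
  next
    fix R assume H: "projector Y R \<and> par V Y E Q R \<and> (\<forall>R'. projector Y R' \<and> par V Y E Q R' \<longrightarrow> proj_le Y R R')"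
    have "img Y R0 \<subseteq> img Y R" using H I0 par_iff2_p14[OF Q] by auto
    moreover have "img Y R \<subseteq> img Y R0" using H R0 I0 par_iff2_p14[OF Q R0] unfolding proj_le_def by auto
    ultimately show "R = R0" using proj_eq_of_img[of Y R R0] H R0 by auto
  qed
  thus ?thesis using I0 by simp
qed

end

definition jtr :: "complex mat \<Rightarrow> complex" where
  "jtr A = (\<Sum>i<dim_row A. A $$ (i,i))"

lemma jtr_comm:
  assumes A: "A \<in> carrier_mat n n" and B: "B \<in> carrier_mat n n"
  shows "jtr (A * B) = jtr (B * A)"
proof -
  have "jtr (A * B) = (\<Sum>i<n. \<Sum>k<n. A $$ (i,k) * B $$ (k,i))"
    unfolding jtr_def using A B by (intro sum.cong) (auto simp: scalar_prod_def atLeast0LessThan)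
  also have "\<dots> = (\<Sum>k<n. \<Sum>i<n. B $$ (k,i) * A $$ (i,k))"
    by (subst sum.swap) (simp add: mult.commute)
  also have "\<dots> = jtr (B * A)"
    unfolding jtr_def using A B by (intro sum.cong) (auto simp: scalar_prod_def atLeast0LessThan)
  finally show ?thesis .
qed

lemma jtr_similar:
  assumes S: "similar_mat_wit A T P Q" and A: "A \<in> carrier_mat n n"
  shows "jtr A = jtr T"
proof -
  have dims: "T \<in> carrier_mat n n" "P \<in> carrier_mat n n" "Q \<in> carrier_mat n n"
    and PQ: "Q * P = 1\<^sub>m n" and eq: "A = P * T * Q"
    using S A unfolding similar_mat_wit_def Let_def by auto
  have "jtr A = jtr ((P * T) * Q)" using eq by simp
  also have "\<dots> = jtr (Q * (P * T))" by (rule jtr_comm) (use dims in auto)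
  also have "Q * (P * T) = (Q * P) * T" using dims by (simp add: assoc_mult_mat)
  also have "\<dots> = T" using PQ dims by simp
  finally show ?thesis .
qed

lemma jtr_diag: "jtr T = sum_list (diag_mat T)"
  unfolding jtr_def diag_mat_def using sum_set_upt_conv_sum_list_nat[of "\<lambda>i. T $$ (i,i)" 0 "dim_row T"]
  by (simp add: lessThan_atLeast0)

lemma jnf_eig:
  assumes M: "(M :: complex mat) \<in> carrier_mat n n" and tr: "jtr M \<noteq> 0"
  shows "\<exists>v a. eigenvector M v a \<and> a \<noteq> 0"
proof -
  obtain as where cp: "char_poly M = (\<Prod>a\<leftarrow>as. [:- a, 1:])" using char_poly_factorized[OF M] by blast
  obtain T P Q where sd: "schur_decomposition M as = (T, P, Q)" by (cases "schur_decomposition M as") auto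
  from schur_decomposition[OF M cp sd] have S: "similar_mat_wit M T P Q" and dg: "diag_mat T = as" by auto
  have "sum_list as \<noteq> 0" using tr jtr_similar[OF S M] jtr_diag[of T] dg by simp
  then obtain a where a: "a \<in> set as" "a \<noteq> 0"
    by (metis (mono_tags, lifting) sum_list_0 map_idI)
  have "poly (char_poly M) a = 0" unfolding cp poly_prod_list
    using a(1) by (simp add: prod_list_zero_iff)
  hence "eigenvalue M a" using eigenvalue_root_char_poly[OF M] by simp
  thus ?thesis using a(2) unfolding eigenvalue_def by blast
qed

lemma eig_exists:
  assumes fin: "finite Y" and tr: "qtrace Y B \<noteq> 0"
  shows "\<exists>w e. is_vec Y w \<and> w \<noteq> (\<lambda>s. 0) \<and> e \<noteq> 0 \<and> mapply Y B w = (\<lambda>s. e * w s)"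
proof -
  define n where "n = card (Pow Y)"
  obtain f where f: "bij_betw f {0..<n} (Pow Y)" unfolding n_def using ex_bij_betw_nat_finite[of "Pow Y"] fin by auto
  define g where "g = the_inv_into {0..<n} f"
  have inj: "inj_on f {0..<n}" and im: "f ` {0..<n} = Pow Y" using f unfolding bij_betw_def by auto
  have fg: "s \<in> Pow Y \<Longrightarrow> f (g s) = s" for s unfolding g_def
    by (rule f_the_inv_into_f[OF inj]) (simp add: im)
  have gr: "s \<in> Pow Y \<Longrightarrow> g s < n" for s
  proof -
    assume "s \<in> Pow Y"
    hence "g s \<in> {0..<n}" unfolding g_def by (intro the_inv_into_into[OF inj]) (auto simp: im)
    thus ?thesis by simp
  qed
  have gf: "j < n \<Longrightarrow> g (f j) = j" for j unfolding g_def
    by (rule the_inv_into_f_f[OF inj]) simp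
  define M where "M = mat n n (\<lambda>(i,j). B (f i) (f j))"
  have Mc: "M \<in> carrier_mat n n" unfolding M_def by simp
  have "jtr M = (\<Sum>i\<in>{0..<n}. B (f i) (f i))" unfolding jtr_def M_def by (simp add: lessThan_atLeast0)
  also have "\<dots> = qtrace Y B" unfolding qtrace_def by (rule sum.reindex_bij_betw[OF f, of "\<lambda>s. B s s"])
  finally have "jtr M \<noteq> 0" using tr by simp
  then obtain v a where ev: "eigenvector M v a" and a: "a \<noteq> 0" using jnf_eig[OF Mc] by blast
  have v: "v \<in> carrier_vec n" "v \<noteq> 0\<^sub>v n" "M *\<^sub>v v = a \<cdot>\<^sub>v v" using ev Mc unfolding eigenvector_def by auto
  define w where "w = (\<lambda>s. if s \<in> Pow Y then v $ (g s) else 0)"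
  have wv: "is_vec Y w" unfolding is_vec_def w_def by auto
  have Bw: "mapply Y B w = (\<lambda>s. a * w s)"
  proof (intro ext)
    fix s
    show "mapply Y B w s = a * w s"
    proof (cases "s \<subseteq> Y")
      case True
      have "mapply Y B w s = (\<Sum>t\<in>Pow Y. B s t * w t)" using True by (simp add: mapply_eq)
      also have "\<dots> = (\<Sum>j\<in>{0..<n}. B s (f j) * w (f j))"
        by (rule sum.reindex_bij_betw[OF f, symmetric])
      also have "\<dots> = (\<Sum>j\<in>{0..<n}. M $$ (g s, j) * v $ j)"
        using True gr fg f gf unfolding M_def w_def
        by (intro sum.cong refl) (auto simp: bij_betw_def)
      also have "\<dots> = (M *\<^sub>v v) $ (g s)" using gr[of s] True v(1) Mc by (simp add: scalar_prod_def)
      also have "\<dots> = a * v $ (g s)" using v(3) gr[of s] True v(1) by simp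
      also have "\<dots> = a * w s" using True unfolding w_def by simp
      finally show ?thesis .
    qed (simp add: mapply_def w_def)
  qed
  have "w \<noteq> (\<lambda>s. 0)"
  proof
    assume w0: "w = (\<lambda>s. 0)"
    have "v = 0\<^sub>v n"
    proof (rule eq_vecI)
      fix j assume j: "j < dim_vec (0\<^sub>v n :: complex vec)"
      hence jn: "j < n" by simp
      have "f j \<in> Pow Y" using f jn unfolding bij_betw_def by auto
      hence "w (f j) = v $ j" unfolding w_def using gf[OF jn] by simp
      thus "v $ j = 0\<^sub>v n $ j" using w0 jn by simp
    qed (use v(1) in simp)
    thus False using v(2) by simp
  qed
  thus ?thesis using wv a Bw by blast
qed

abbreviation EV :: "nat set \<Rightarrow> qop \<Rightarrow> qvec set" where
  "EV Y A \<equiv> {v. is_vec Y v \<and> (\<exists>e. e \<noteq> 0 \<and> mapply Y A v = (\<lambda>s. e * v s))}"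

lemma mapply_sum_vec: "mapply X A (\<lambda>s. \<Sum>v\<in>S. f v s) = (\<lambda>s. \<Sum>v\<in>S. mapply X A (f v) s)"
proof (intro ext)
  fix s
  show "mapply X A (\<lambda>s. \<Sum>v\<in>S. f v s) s = (\<Sum>v\<in>S. mapply X A (f v) s)"
  proof (cases "s \<subseteq> X")
    case True
    have "mapply X A (\<lambda>s. \<Sum>v\<in>S. f v s) s = (\<Sum>t\<in>Pow X. \<Sum>v\<in>S. A s t * f v t)"
      using True by (simp add: mapply_eq sum_distrib_left)
    also have "\<dots> = (\<Sum>v\<in>S. \<Sum>t\<in>Pow X. A s t * f v t)" by (rule sum.swap)
    also have "\<dots> = (\<Sum>v\<in>S. mapply X A (f v) s)" using True by (simp add: mapply_eq)
    finally show ?thesis .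
  qed (simp add: mapply_def)
qed

lemma mapply_zero_op: "mapply X (\<lambda>s t. 0) x = (\<lambda>s. 0)"
  unfolding mapply_def by auto

lemma mapply_zero_vec: "mapply X A (\<lambda>s. 0) = (\<lambda>s. 0)"
  unfolding mapply_def by auto

lemma sum_vec_is_vec:
  assumes "S \<subseteq> EV Y A" shows "is_vec Y (\<lambda>s. \<Sum>v\<in>S. c v * v s)"
  unfolding is_vec_def
proof (intro allI impI)
  fix s assume s: "\<not> s \<subseteq> Y"
  have "\<forall>v\<in>S. v s = 0" using assms s unfolding is_vec_def by blast
  thus "(\<Sum>v\<in>S. c v * v s) = 0" by simp
qed

lemma supp_memI: "finite S \<Longrightarrow> S \<subseteq> EV Y A \<Longrightarrow> (\<lambda>s. \<Sum>v\<in>S. c v * v s) \<in> supp Y A"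
  unfolding supp_def by blast

lemma supp_memE:
  assumes "\<psi> \<in> supp Y A"
  obtains S c where "finite S" "S \<subseteq> EV Y A" "\<psi> = (\<lambda>s. \<Sum>v\<in>S. c v * v s)"
  using assms unfolding supp_def by blast

lemma supp_subsp: "subsp Y (supp Y A)"
  unfolding subsp_def
proof (intro conjI allI impI ballI)
  fix \<psi> assume "\<psi> \<in> supp Y A"
  then obtain S c where S: "finite S" "S \<subseteq> EV Y A" and p: "\<psi> = (\<lambda>s. \<Sum>v\<in>S. c v * v s)" by (rule supp_memE)
  show "is_vec Y \<psi>" unfolding p by (rule sum_vec_is_vec[OF S(2)])
next
  show "(\<lambda>s. 0) \<in> supp Y A" using supp_memI[of "{}" Y A] by simp
next
  fix a u w assume u: "u \<in> supp Y A" and w: "w \<in> supp Y A"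
  obtain S1 c1 where S1: "finite S1" "S1 \<subseteq> EV Y A" and pu: "u = (\<lambda>s. \<Sum>v\<in>S1. c1 v * v s)" using u by (rule supp_memE)
  obtain S2 c2 where S2: "finite S2" "S2 \<subseteq> EV Y A" and pw: "w = (\<lambda>s. \<Sum>v\<in>S2. c2 v * v s)" using w by (rule supp_memE)
  define c where "c = (\<lambda>v. (if v \<in> S1 then c1 v else 0) + a * (if v \<in> S2 then c2 v else 0))"
  have fin: "finite (S1 \<union> S2)" using S1 S2 by simp
  have eq: "(\<lambda>s. u s + a * w s) = (\<lambda>s. \<Sum>v\<in>S1 \<union> S2. c v * v s)"
  proof (intro ext)
    fix s
    have "(\<Sum>v\<in>S1 \<union> S2. c v * v s) = (\<Sum>v\<in>S1 \<union> S2. (if v \<in> S1 then c1 v * v s else 0)) + a * (\<Sum>v\<in>S1 \<union> S2. (if v \<in> S2 then c2 v * v s else 0))"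
    proof -
      have "\<And>v. c v * v s = (if v \<in> S1 then c1 v * v s else 0) + a * (if v \<in> S2 then c2 v * v s else 0)"
        unfolding c_def by (simp add: algebra_simps)
      hence "(\<Sum>v\<in>S1 \<union> S2. c v * v s) = (\<Sum>v\<in>S1 \<union> S2. (if v \<in> S1 then c1 v * v s else 0) + a * (if v \<in> S2 then c2 v * v s else 0))"
        by simp
      thus ?thesis by (simp only: sum.distrib sum_distrib_left)
    qed
    also have "\<dots> = (\<Sum>v\<in>S1. c1 v * v s) + a * (\<Sum>v\<in>S2. c2 v * v s)"
    proof -
      have i1: "(S1 \<union> S2) \<inter> S1 = S1" "(S1 \<union> S2) \<inter> S2 = S2" by blast+
      have "(\<Sum>v\<in>S1 \<union> S2. (if v \<in> S1 then c1 v * v s else 0)) = (\<Sum>v\<in>S1. c1 v * v s)"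
        using sum.inter_restrict[OF fin, of "\<lambda>v. c1 v * v s" S1] unfolding i1 by simp
      moreover have "(\<Sum>v\<in>S1 \<union> S2. (if v \<in> S2 then c2 v * v s else 0)) = (\<Sum>v\<in>S2. c2 v * v s)"
        using sum.inter_restrict[OF fin, of "\<lambda>v. c2 v * v s" S2] unfolding i1 by simp
      ultimately show ?thesis by simp
    qed
    finally show "u s + a * w s = (\<Sum>v\<in>S1 \<union> S2. c v * v s)" unfolding pu pw by simp
  qed
  have sub: "S1 \<union> S2 \<subseteq> EV Y A" using S1 S2 by blast
  show "(\<lambda>s. u s + a * w s) \<in> supp Y A" unfolding eq by (rule supp_memI[OF fin sub])
qed

lemma supp_inv:
  assumes "\<psi> \<in> supp Y A" shows "mapply Y A \<psi> \<in> supp Y A"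
proof -
  obtain S c where S: "finite S" "S \<subseteq> EV Y A" and p: "\<psi> = (\<lambda>s. \<Sum>v\<in>S. c v * v s)" using assms by (rule supp_memE)
  define e where "e = (\<lambda>v. SOME e. e \<noteq> 0 \<and> mapply Y A v = (\<lambda>s. e * v s))"
  have e: "mapply Y A v = (\<lambda>s. e v * v s)" if "v \<in> S" for v
  proof -
    have "\<exists>e. e \<noteq> 0 \<and> mapply Y A v = (\<lambda>s. e * v s)" using S(2) that by blast
    from someI_ex[OF this] show ?thesis unfolding e_def by blast
  qed
  have "mapply Y A \<psi> = (\<lambda>s. \<Sum>v\<in>S. (c v * e v) * v s)"
    unfolding p mapply_sum_vec mapply_scale_vec using e by (intro ext sum.cong refl) (simp add: mult.assoc)
  thus ?thesis using supp_memI[OF S] by simp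
qed

lemma supp_rng: "supp Y A \<subseteq> rng Y A"
proof
  fix \<psi> assume "\<psi> \<in> supp Y A"
  then obtain S c where S: "finite S" "S \<subseteq> EV Y A" and p: "\<psi> = (\<lambda>s. \<Sum>v\<in>S. c v * v s)" by (rule supp_memE)
  define e where "e = (\<lambda>v. SOME e. e \<noteq> 0 \<and> mapply Y A v = (\<lambda>s. e * v s))"
  have e: "e v \<noteq> 0 \<and> mapply Y A v = (\<lambda>s. e v * v s)" if "v \<in> S" for v
  proof -
    have "\<exists>e. e \<noteq> 0 \<and> mapply Y A v = (\<lambda>s. e * v s)" using S(2) that by blast
    from someI_ex[OF this] show ?thesis unfolding e_def .
  qed
  define u where "u = (\<lambda>s. \<Sum>v\<in>S. (c v / e v) * v s)"
  have uv: "is_vec Y u" unfolding u_def by (rule sum_vec_is_vec[OF S(2)])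
  have "mapply Y A u = \<psi>"
    unfolding u_def p mapply_sum_vec mapply_scale_vec using e by (intro ext sum.cong refl) simp
  thus "\<psi> \<in> rng Y A" unfolding rng_def using uv by blast
qed

lemma rng_supp:
  assumes fin: "finite Y" and A: "positive Y A"
  shows "rng Y A \<subseteq> supp Y A"
proof -
  obtain P where P: "projector Y P" and IP: "img Y P = supp Y A" using proj_exists[OF fin supp_subsp] by blast
  note PD = projectorD[OF P]
  have opA: "is_op Y A" by (rule positiveD(3)[OF A])
  have hA: "adj A = A" by (rule pos_herm[OF fin A])
  define P' where "P' = (\<lambda>s t. idop Y s t - P s t)"
  have hP': "adj P' = P'" unfolding P'_def by (rule compl_herm[OF PD(3)])
  have PAP: "mmult Y P (mmult Y A P) = mmult Y A P"
  proof (rule fix_mmult[OF fin is_op_mmult])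
    fix t assume t: "t \<subseteq> Y"
    have "colv Y P t \<in> supp Y A" using colv_img[OF P t] IP by simp
    hence "mapply Y A (colv Y P t) \<in> img Y P" using supp_inv IP by blast
    thus "mapply Y P (colv Y (mmult Y A P) t) = colv Y (mmult Y A P) t"
      unfolding mapply_colv[OF t, symmetric] img_def by simp
  qed
  have PA: "mmult Y P A = mmult Y A P"
  proof -
    have "adj (mmult Y P (mmult Y A P)) = adj (mmult Y A P)" using PAP by simp
    hence "mmult Y (mmult Y P A) P = mmult Y P A" unfolding adj_mmult PD(3) hA .
    thus ?thesis using PAP by (simp add: mmult_assoc)
  qed
  have mapPA: "mapply Y P (mapply Y A x) = mapply Y A (mapply Y P x)" for x
    unfolding mapply_mmult[symmetric] PA ..
  have PP': "mapply Y P (mapply Y P' x) = (\<lambda>s. 0)" for x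
  proof -
    have "mapply Y P (mapply Y P' x) = mapply Y (mmult Y P P') x" by (simp add: mapply_mmult)
    also have "mmult Y P P' = (\<lambda>s t. 0)" unfolding P'_def mmult_diff_right mmult_idop_right[OF fin PD(1)] PD(2) by simp
    finally show ?thesis by (simp add: mapply_zero_op)
  qed
  have P'v: "mapply Y P' x = (\<lambda>s. x s - mapply Y P x s)" if "is_vec Y x" for x
    unfolding P'_def mapply_diff_op mapply_idop[OF fin that] ..
  define B where "B = mmult Y (mmult Y (adj P') A) P'"
  have trB: "qtrace Y B = 0"
  proof (rule ccontr)
    assume "qtrace Y B \<noteq> 0"
    then obtain w e where wv: "is_vec Y w" and w0: "w \<noteq> (\<lambda>s. 0)" and e0: "e \<noteq> 0" and Bw: "mapply Y B w = (\<lambda>s. e * w s)"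
      using eig_exists[OF fin] by blast
    have Bx: "mapply Y B x = mapply Y P' (mapply Y A (mapply Y P' x))" for x
      unfolding B_def hP' mapply_mmult ..
    have "w = mapply Y B (\<lambda>s. (1/e) * w s)" unfolding mapply_scale_vec Bw using e0 by simp
    hence wP': "w = mapply Y P' (mapply Y A (mapply Y P' (\<lambda>s. (1/e) * w s)))" unfolding Bx .
    have Pw: "mapply Y P w = (\<lambda>s. 0)" by (subst wP') (rule PP')
    have P'w: "mapply Y P' w = w" unfolding P'v[OF wv] Pw by simp
    have PAw: "mapply Y P (mapply Y A w) = (\<lambda>s. 0)" unfolding mapPA Pw by (rule mapply_zero_vec)
    have "mapply Y A w = mapply Y P' (mapply Y A w)" unfolding P'v[OF is_vec_mapply] PAw by simp
    also have "\<dots> = mapply Y B w" unfolding Bx P'w ..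
    finally have Aw: "mapply Y A w = (\<lambda>s. e * w s)" using Bw by simp
    have "w \<in> supp Y A" using supp_memI[of "{w}" Y A "\<lambda>_. 1"] wv e0 Aw by auto
    hence "mapply Y P w = w" using IP unfolding img_def by auto
    thus False using Pw w0 by simp
  qed
  have AP': "mmult Y A P' = (\<lambda>s t. 0)"
    by (rule trace_sandwich_zero[OF fin A]) (use trB in \<open>simp add: B_def\<close>)
  show ?thesis
  proof
    fix x assume "x \<in> rng Y A"
    then obtain v where v: "is_vec Y v" and x: "x = mapply Y A v" unfolding rng_def by auto
    have "mapply Y A (mapply Y P' v) = (\<lambda>s. 0)" unfolding mapply_mmult[symmetric] AP' by (rule mapply_zero_op)
    hence "mapply Y A v = mapply Y A (mapply Y P v)" unfolding P'v[OF v] mapply_diff_vec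
      by (metis (no_types, lifting) eq_iff_diff_eq_0 ext)
    moreover have "mapply Y P v \<in> supp Y A" using img_mapply[OF P] IP by simp
    ultimately show "x \<in> supp Y A" using supp_inv x by simp
  qed
qed

lemma supp_eq_rng: "finite Y \<Longrightarrow> positive Y A \<Longrightarrow> supp Y A = rng Y A"
  using supp_rng rng_supp by blast

theorem lemma4p6:
  fixes V W :: "nat set" and E :: qsop and Q :: qop
  assumes "finite V" and "DProg V E" and "finite W" and "projector W Q"
  shows "img (V \<union> W) (wpp V (V \<union> W) E (ext W (V \<union> W) Q))
           = Efix (V \<union> W) (sadj (V \<union> W) (sext V (V \<union> W) E) (ext W (V \<union> W) Q)) \<and>
         img (V \<union> W) (wlpp V (V \<union> W) E (ext W (V \<union> W) Q))
           = Nnull (V \<union> W) (sadj (V \<union> W) (sext V (V \<union> W) E)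
                                (proj_compl (V \<union> W) (ext W (V \<union> W) Q))) \<and>
         img (V \<union> W) (spp V (V \<union> W) E (ext W (V \<union> W) Q))
           = supp (V \<union> W) (sext V (V \<union> W) E (ext W (V \<union> W) Q))"
proof -
  let ?Y = "V \<union> W"
  have finY: "finite ?Y" using assms(1,3) by simp
  have VY: "V \<subseteq> ?Y" by simp
  have Qy: "projector ?Y (ext W ?Y Q)" by (rule projector_ext[OF finY _ assms(4)]) simp
  have Ef: "Efix X A = img X A" for X A unfolding Efix_def img_def ..
  have aEq: "adjE V ?Y E B = sadj ?Y (sext V ?Y E) B" for B by (rule adjE_def[OF finY VY assms(2)])
  have 1: "img ?Y (wpp V ?Y E (ext W ?Y Q)) = Efix ?Y (sadj ?Y (sext V ?Y E) (ext W ?Y Q))"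
    unfolding wpp_img[OF finY VY assms(2) Qy] Ef aEq ..
  have 2: "img ?Y (wlpp V ?Y E (ext W ?Y Q)) = Nnull ?Y (sadj ?Y (sext V ?Y E) (proj_compl ?Y (ext W ?Y Q)))"
    unfolding wlpp_img[OF finY VY assms(2) Qy] aEq ..
  have pos: "positive ?Y (sext V ?Y E (ext W ?Y Q))"
    by (rule DProgD(4)[OF assms(2) finY VY projector_positive[OF Qy]])
  have 3: "img ?Y (spp V ?Y E (ext W ?Y Q)) = supp ?Y (sext V ?Y E (ext W ?Y Q))"
    unfolding spp_img[OF finY VY assms(2) Qy] supp_eq_rng[OF finY pos] ..
  show ?thesis using 1 2 3 by blast
qed

end
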